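(* Let $X\sim N(\mu,\Sigma)$ be a $p\times 1$ random vector with $\Sigma$ non-singular, and let $\hat\Sigma$ (from $n$ independent samples) be non-singular. Let $\Sigma_{\hat\Omega}=U^TV^*U/n$ with \[ V^*=(I_{p^2}+K)(\Sigma\otimes\Sigma),\qquad U=\big[\Sigma\otimes\Sigma\big]^{-1}\Big[(P_d^{-1/2}\otimes P_d^{-1/2})-\tfrac12(I_{p^2}+K)(I_p\otimes\Omega P_d^{-1})D\Big], \] and let $\rho^*=\frac{\mathrm{tr}(\Sigma_{\hat\Omega})}{\mathrm{tr}(\Sigma_{\hat\Omega})+\sum_{i=1}^p\lambda_i^2-p}$, where $\lambda_1,\dots,\lambda_p$ are the eigenvalues of $\Omega$, and suppose $0<\rho^*<1$. Define $\hat V^*$ and $\hat U$ by replacing $\Sigma,P_d,\Omega$ in $V^*,U$ by $\hat\Sigma,\hat P_d,\hat\Omega$, let $\widehat{\mathrm{tr}(\Sigma_{\hat\Omega})}=\mathrm{tr}(\hat U^T\hat V^*\hat U)/n$, and \[ \hat\rho^*=\frac{\widehat{\mathrm{tr}(\Sigma_{\hat\Omega})}}{\widehat{\mathrm{tr}(\Sigma_{\hat\Omega})}+\sum_{i=1}^p\hat\lambda_i^2-p}, \] where $\hat\lambda_1,\dots,\hat\lambda_p$ are the eigenvalues of $\hat\Omega$. Then $\hat\rho^*$ is an $n$-consistent estimator of $\rho^*$ (consistent as $n\to\infty$).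
   Context: $P=\Sigma^{-1}$, $P_d=\mathrm{dg}(P)$, $\Omega=P_d^{-1/2}PP_d^{-1/2}$. From independent samples $X_1,\dots,X_n$, $\hat\Sigma=\frac1n\sum_{i=1}^n(X_i-\bar X)(X_i-\bar X)^T$, $\hat P=\hat\Sigma^{-1}$, $\hat P_d=\mathrm{dg}(\hat P)$, $\hat\Omega=\hat P_d^{-1/2}\hat P\hat P_d^{-1/2}$. $\otimes$ is the Kronecker product. $K$ is the $p^2\times p^2$ commutation matrix $[E_{i,j}]_{i,j=1}^p$, with $E_{i,j}$ the $p\times p$ matrix having a 1 in position $(j,i)$ and 0 elsewhere ($K\mathrm{vec}(A)=\mathrm{vec}(A^T)$, $\mathrm{vec}$ stacking columns). $D=\sum_{i=1}^pE_{i,i}\otimes E_{i,i}$. *)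

theory Defs
  imports "HOL-Probability.Probability" "HOL-Computational_Algebra.Polynomial"
begin

text \<open>A pair (a,b) stands for position (a-1)p+b, so vec(A) at (j,i) is A_{ij}
  and the Kronecker product is (A \<otimes> B)_{(i,k),(j,l)} = A_{ij} B_{kl}.\<close>

definition kron :: "real^'p::finite^'p \<Rightarrow> real^'q::finite^'q \<Rightarrow> real^('p \<times> 'q)^('p \<times> 'q)" where
  "kron A B = (\<chi> r c. A $ fst r $ fst c * B $ snd r $ snd c)"

text \<open>Commutation matrix K = [E_{i,j}], E_{i,j} having a 1 in position (j,i).\<close>
definition commut :: "real^('p::finite \<times> 'p)^('p \<times> 'p)" where
  "commut = (\<chi> r c. if fst r = snd c \<and> snd r = fst c then 1 else 0)"

text \<open>D = sum_i E_{i,i} \<otimes> E_{i,i}.\<close>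
definition Dmat :: "real^('p::finite \<times> 'p)^('p \<times> 'p)" where
  "Dmat = (\<chi> r c. if fst r = snd r \<and> fst c = snd c \<and> fst r = fst c then 1 else 0)"

definition dg :: "real^'p::finite^'p \<Rightarrow> real^'p::finite^'p" where
  "dg A = (\<chi> i j. if i = j then A $ i $ j else 0)"

definition diag_powr :: "real^'p::finite^'p \<Rightarrow> real \<Rightarrow> real^'p::finite^'p" where
  "diag_powr A a = (\<chi> i j. if i = j then A $ i $ i powr a else 0)"

definition Omega_of :: "real^'p::finite^'p \<Rightarrow> real^'p::finite^'p" where
  "Omega_of S = (let P = matrix_inv S; Pd = dg P in diag_powr Pd (-1/2) ** P ** diag_powr Pd (-1/2))"

definition Vstar :: "real^'p::finite^'p \<Rightarrow> real^('p::finite \<times> 'p)^('p \<times> 'p)" where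
  "Vstar S = (mat 1 + commut) ** kron S S"

definition Umat :: "real^'p::finite^'p \<Rightarrow> real^('p::finite \<times> 'p)^('p \<times> 'p)" where
  "Umat S = (let P = matrix_inv S; Pd = dg P; Om = Omega_of S in
     matrix_inv (kron S S) **
       (kron (diag_powr Pd (-1/2)) (diag_powr Pd (-1/2))
        - (1/2) *\<^sub>R ((mat 1 + commut) ** kron (mat 1) (Om ** matrix_inv Pd) ** Dmat)))"

definition trSigOmega :: "real^'p::finite^'p \<Rightarrow> nat \<Rightarrow> real" where
  "trSigOmega S n = trace (transpose (Umat S) ** Vstar S ** Umat S) / real n"

definition charpoly :: "real^'p::finite^'p \<Rightarrow> real poly" where
  "charpoly A = det (\<chi> i j. (if i = j then [:0, 1:] else 0) - [:A $ i $ j:])"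

text \<open>Sum of squared eigenvalues, counted with algebraic multiplicity (over the complex roots
  of the characteristic polynomial; real part taken, all are real for symmetric A).\<close>
definition sum_sq_eigs :: "real^'p::finite^'p \<Rightarrow> real" where
  "sum_sq_eigs A = (let q = map_poly complex_of_real (charpoly A) in
     Re (\<Sum>z\<in>{z. poly q z = 0}. of_nat (order z q) * z ^ 2))"

definition rho_star :: "real^'p::finite^'p \<Rightarrow> nat \<Rightarrow> real" where
  "rho_star S n = trSigOmega S n /
     (trSigOmega S n + sum_sq_eigs (Omega_of S) - real CARD('p))"

definition mvn_density :: "real^'p \<Rightarrow> real^'p::finite^'p \<Rightarrow> real^'p \<Rightarrow> real" where
  "mvn_density mu S x =
     exp (- (1/2) * ((x - mu) \<bullet> (matrix_inv S *v (x - mu)))) / sqrt ((2 * pi) ^ CARD('p) * det S)"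

definition outer :: "real^'p \<Rightarrow> real^'p \<Rightarrow> real^'p::finite^'p" where
  "outer a b = (\<chi> i j. a $ i * b $ j)"

definition sample_cov :: "(nat \<Rightarrow> real^'p) \<Rightarrow> nat \<Rightarrow> real^'p::finite^'p" where
  "sample_cov x n = (let xbar = (1 / real n) *\<^sub>R (\<Sum>i<n. x i) in
     (1 / real n) *\<^sub>R (\<Sum>i<n. outer (x i - xbar) (x i - xbar)))"

definition conv_prob_zero :: "'a measure \<Rightarrow> (nat \<Rightarrow> 'a \<Rightarrow> real) \<Rightarrow> bool" where
  "conv_prob_zero M Y \<longleftrightarrow>
     (\<forall>e>0. (\<lambda>n. measure M {\<omega> \<in> space M. \<bar>Y n \<omega>\<bar> > e}) \<longlonglongrightarrow> 0)"

end

theory Submission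
  imports Defs "HOL-Computational_Algebra.Fundamental_Theorem_Algebra"
begin

lemma sum_mset_count:
  fixes f :: "'a \<Rightarrow> 'b::comm_semiring_1"
  shows "(\<Sum>x\<in>set_mset M. of_nat (count M x) * f x) = sum_mset (image_mset f M)"
proof (induction M)
  case empty then show ?case by simp
next
  case (add a M)
  show ?case
  proof (cases "a \<in># M")
    case True
    have "(\<Sum>x\<in>set_mset (add_mset a M). of_nat (count (add_mset a M) x) * f x)
        = (\<Sum>x\<in>set_mset M. of_nat (count M x) * f x + (if x = a then f x else 0))"
      using True by (intro sum.cong) (auto simp: insert_absorb algebra_simps)
    also have "\<dots> = (\<Sum>x\<in>set_mset M. of_nat (count M x) * f x) + f a"
      using True by (simp add: sum.distrib)
    finally show ?thesis using add by (simp add: add.commute)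
  next
    case False
    have "(\<Sum>x\<in>set_mset (add_mset a M). of_nat (count (add_mset a M) x) * f x)
        = f a + (\<Sum>x\<in>set_mset M. of_nat (count (add_mset a M) x) * f x)"
      using False by (simp add: sum.insert not_in_iff)
    also have "(\<Sum>x\<in>set_mset M. of_nat (count (add_mset a M) x) * f x) = (\<Sum>x\<in>set_mset M. of_nat (count M x) * f x)"
      using False by (intro sum.cong) auto
    finally show ?thesis using add by simp
  qed
qed

lemma linprod_coeffs:
  fixes A :: "complex multiset"
  defines "P \<equiv> (\<Prod>x\<in>#A. [:-x, 1:])"
  shows "coeff P (size A) = 1 \<and> degree P = size A
    \<and> (size A \<ge> 1 \<longrightarrow> coeff P (size A - 1) = - sum_mset A)
    \<and> (size A \<ge> 2 \<longrightarrow> 2 * coeff P (size A - 2) = (sum_mset A)^2 - sum_mset (image_mset (\<lambda>x. x^2) A))"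
  unfolding P_def
proof (induction A)
  case empty then show ?case by simp
next
  case (add a A)
  define Q where "Q = (\<Prod>x\<in>#A. [:-x, 1:])"
  define n where "n = size A"
  have IH: "coeff Q n = 1" "degree Q = n"
    "n \<ge> 1 \<Longrightarrow> coeff Q (n - 1) = - sum_mset A"
    "n \<ge> 2 \<Longrightarrow> 2 * coeff Q (n - 2) = (sum_mset A)^2 - sum_mset (image_mset (\<lambda>x. x^2) A)"
    using add unfolding Q_def n_def by auto
  have P: "(\<Prod>x\<in>#add_mset a A. [:-x, 1:]) = [:-a, 1:] * Q" by (simp add: Q_def)
  have cf: "coeff ([:-a, 1:] * Q) (Suc k) = coeff Q k - a * coeff Q (Suc k)" for k
    by (simp add: algebra_simps)
  have cf0: "coeff ([:-a, 1:] * Q) 0 = - a * coeff Q 0"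
    by simp
  have hi: "coeff Q (Suc n) = 0" using IH(2) by (simp add: coeff_eq_0)
  have Q0: "Q \<noteq> 0" using IH(1) by auto
  have deg: "degree ([:-a, 1:] * Q) = Suc n"
    using Q0 IH(2) by (subst degree_mult_eq) auto
  have c1: "coeff ([:-a, 1:] * Q) (Suc n) = 1" using cf[of n] hi IH(1) by simp
  have c2: "coeff ([:-a, 1:] * Q) n = - (a + sum_mset A)"
  proof (cases n)
    case 0
    then show ?thesis using cf0 IH(1) by (simp add: n_def)
  next
    case (Suc m)
    then show ?thesis using cf[of m] IH(1) IH(3) by (simp add: algebra_simps)
  qed
  have c3: "n \<ge> 1 \<Longrightarrow> 2 * coeff ([:-a, 1:] * Q) (n - 1) = (a + sum_mset A)^2 - (a^2 + sum_mset (image_mset (\<lambda>x. x^2) A))"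
  proof -
    assume "n \<ge> 1"
    show ?thesis
    proof (cases "n = 1")
      case True
      then obtain b where "A = {#b#}" unfolding n_def by (metis size_1_singleton_mset)
      then show ?thesis using True by (simp add: Q_def power2_eq_square algebra_simps)
    next
      case False
      then obtain m where m: "n = Suc (Suc m)" using \<open>n \<ge> 1\<close> by (metis One_nat_def Suc_le_D le_SucE nat.inject not0_implies_Suc)
      have "2 * coeff ([:-a, 1:] * Q) (n - 1) = 2 * coeff Q m - 2 * a * coeff Q (Suc m)"
        using cf[of m] m by (simp add: algebra_simps)
      also have "\<dots> = (a + sum_mset A)^2 - (a^2 + sum_mset (image_mset (\<lambda>x. x^2) A))"
        using IH(3) IH(4) m by (simp add: power2_eq_square algebra_simps)
      finally show ?thesis .
    qed
  qed
  show ?case unfolding P using c1 c2 c3 deg by (simp add: n_def)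
qed

lemma deg1_expand: "degree (f::'a::comm_ring_1 poly) \<le> 1 \<Longrightarrow> f = [:coeff f 0, coeff f 1:]"
  by (auto simp: poly_eq_iff coeff_pCons coeff_eq_0 split: nat.splits)

lemma prod_deg1:
  fixes f :: "'i \<Rightarrow> 'a::comm_ring_1 poly"
  assumes "finite I" "\<And>i. i \<in> I \<Longrightarrow> degree (f i) \<le> 1"
  shows "degree (\<Prod>i\<in>I. f i) \<le> card I \<and> coeff (\<Prod>i\<in>I. f i) (card I) = (\<Prod>i\<in>I. coeff (f i) 1)"
  using assms
proof (induction I rule: finite_induct)
  case empty then show ?case by simp
next
  case (insert x F)
  define g where "g = (\<Prod>i\<in>F. f i)"
  have IH: "degree g \<le> card F" "coeff g (card F) = (\<Prod>i\<in>F. coeff (f i) 1)"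
    using insert unfolding g_def by auto
  have fx: "f x = [:coeff (f x) 0, coeff (f x) 1:]" using insert by (intro deg1_expand) auto
  have "degree (f x * g) \<le> degree (f x) + degree g" by (rule degree_mult_le)
  also have "\<dots> \<le> Suc (card F)" using IH insert.prems[of x] by simp
  finally have d: "degree (f x * g) \<le> Suc (card F)" .
  have "coeff (f x * g) (Suc (card F)) = coeff (f x) 0 * coeff g (Suc (card F)) + coeff (f x) 1 * coeff g (card F)"
    by (subst fx) (simp add: mult_pCons_left)
  also have "coeff g (Suc (card F)) = 0" using IH by (simp add: coeff_eq_0)
  finally show ?case using insert d IH by (simp add: g_def)
qed

definition cpm :: "real^'n::finite^'n \<Rightarrow> real poly^'n^'n" where
  "cpm A = (\<chi> i j. (if i = j then [:0, 1:] else 0) - [:A $ i $ j:])"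

lemma charpoly_cpm: "charpoly A = det (cpm A)"
  by (simp add: charpoly_def cpm_def)

lemma cpm_deg: "degree (cpm A $ i $ j) \<le> 1"
  by (auto simp: cpm_def degree_diff_le)

lemma coeff_of_int_mult: "coeff (of_int c * p) k = of_int c * coeff (p::'a::comm_ring_1 poly) k"
  by (metis coeff_smult of_int_poly smult_conv_map_poly mult.commute mult_smult_left mult_1 smult_one)

lemma charpoly_top:
  "degree (charpoly (A::real^'n::finite^'n)) \<le> CARD('n) \<and> coeff (charpoly A) CARD('n) = 1"
proof -
  let ?M = "cpm A"
  have P: "\<And>p. degree (\<Prod>i\<in>UNIV. ?M $ i $ p i) \<le> CARD('n) \<and> coeff (\<Prod>i\<in>UNIV. ?M $ i $ p i) CARD('n) = (\<Prod>i\<in>UNIV. coeff (?M $ i $ p i) 1)"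
    using cpm_deg by (intro prod_deg1) auto
  have "degree (charpoly A) \<le> CARD('n)"
    unfolding charpoly_cpm det_def
  proof (rule degree_sum_le)
    fix p
    show "degree (of_int (sign p) * (\<Prod>i\<in>UNIV. ?M $ i $ p i)) \<le> CARD('n)"
    proof -
      have "of_int (sign p) * (\<Prod>i\<in>UNIV. ?M $ i $ p i) = smult (of_int (sign p)) (\<Prod>i\<in>UNIV. ?M $ i $ p i)"
        by (simp add: of_int_poly)
      then show ?thesis using P[of p] degree_smult_le[of "of_int (sign p)" "\<Prod>i\<in>UNIV. ?M $ i $ p i"] by simp
    qed
  qed simp
  moreover have "coeff (charpoly A) CARD('n) = det (\<chi> i j. coeff (?M $ i $ j) 1)"
    unfolding charpoly_cpm det_def
    by (simp add: coeff_sum coeff_of_int_mult P)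
  moreover have "(\<chi> i j. coeff (?M $ i $ j) 1) = (mat 1 :: real^'n^'n)"
    by (simp add: cpm_def mat_def vec_eq_iff)
  ultimately show ?thesis by (simp add: det_I)
qed

lemma tendsto_coeff_prod:
  fixes f :: "'i \<Rightarrow> 'b \<Rightarrow> real poly"
  assumes "finite I" "\<And>i k. i \<in> I \<Longrightarrow> ((\<lambda>x. coeff (f i x) k) \<longlongrightarrow> coeff (g i) k) F"
  shows "((\<lambda>x. coeff (\<Prod>i\<in>I. f i x) k) \<longlongrightarrow> coeff (\<Prod>i\<in>I. g i) k) F"
  using assms
proof (induction I arbitrary: k rule: finite_induct)
  case empty then show ?case by simp
next
  case (insert y I)
  show ?case
    using insert by (simp add: coeff_mult, intro tendsto_intros) auto
qed

lemma tendsto_charpoly_coeff: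
  assumes "(G \<longlongrightarrow> (A::real^'n::finite^'n)) F"
  shows "((\<lambda>x. coeff (charpoly (G x)) k) \<longlongrightarrow> coeff (charpoly A) k) F"
proof -
  have e: "\<And>i j k. ((\<lambda>x. coeff (cpm (G x) $ i $ j) k) \<longlongrightarrow> coeff (cpm A $ i $ j) k) F"
  proof -
    fix i j k
    have "((\<lambda>x. (if i = j then coeff [:0,1::real:] k else 0) - (if k = 0 then G x $ i $ j else 0))
          \<longlongrightarrow> (if i = j then coeff [:0,1::real:] k else 0) - (if k = 0 then A $ i $ j else 0)) F"
      using tendsto_vec_nth[OF tendsto_vec_nth[OF assms], of i j]
      by (cases "k = 0") (auto intro: tendsto_minus)
    then show "?thesis i j k" by (simp add: cpm_def coeff_pCons split: nat.splits if_splits)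
  qed
  show ?thesis
    unfolding charpoly_cpm det_def
    by (simp add: coeff_sum coeff_of_int_mult, intro tendsto_intros tendsto_coeff_prod e) auto
qed

lemma sum_sq_eigs_formula:
  fixes A :: "real^'n::finite^'n"
  shows "sum_sq_eigs A = (coeff (charpoly A) (CARD('n) - 1))^2
      - 2 * (if CARD('n) \<ge> 2 then coeff (charpoly A) (CARD('n) - 2) else 0)"
proof -
  define p where "p = CARD('n)"
  define q where "q = map_poly complex_of_real (charpoly A)"
  have top: "degree (charpoly A) \<le> p" "coeff (charpoly A) p = 1"
    using charpoly_top[of A] by (auto simp: p_def)
  have dq: "degree (charpoly A) = p"
    using top by (metis coeff_eq_0 le_antisym not_le_imp_less zero_neq_one)
  have cq: "coeff q k = of_real (coeff (charpoly A) k)" for k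
    by (simp add: q_def coeff_map_poly)
  have degq: "degree q = p" using dq unfolding q_def by (subst degree_map_poly) auto
  have lq: "lead_coeff q = 1" using degq cq top by simp
  have q0: "q \<noteq> 0" using lq by auto
  define R where "R = proots q"
  have qR: "q = (\<Prod>x\<in>#R. [:-x, 1:])"
    using complex_poly_decompose_multiset[of q] lq by (simp add: R_def)
  have sR: "size R = p" using size_proots_complex[of q] degq by (simp add: R_def)
  have p1: "p \<ge> 1" unfolding p_def by (simp add: Suc_leI)
  have L: "coeff q (p - 1) = - sum_mset R"
          "p \<ge> 2 \<Longrightarrow> 2 * coeff q (p - 2) = (sum_mset R)^2 - sum_mset (image_mset (\<lambda>x. x^2) R)"
    using linprod_coeffs[of R] sR p1 qR by auto
  have S: "(\<Sum>z\<in>{z. poly q z = 0}. of_nat (order z q) * z ^ 2) = sum_mset (image_mset (\<lambda>x. x^2) R)"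
  proof -
    have "(\<Sum>z\<in>{z. poly q z = 0}. of_nat (order z q) * z ^ 2) = (\<Sum>z\<in>set_mset R. of_nat (count R z) * z ^ 2)"
      using q0 by (simp add: R_def)
    also have "\<dots> = sum_mset (image_mset (\<lambda>x. x^2) R)" by (rule sum_mset_count)
    finally show ?thesis .
  qed
  have main: "sum_mset (image_mset (\<lambda>x. x^2) R) = (coeff q (p - 1))^2 - 2 * (if p \<ge> 2 then coeff q (p - 2) else 0)"
  proof (cases "p \<ge> 2")
    case True then show ?thesis using L by (simp add: power2_eq_square algebra_simps)
  next
    case False
    then have "p = 1" using p1 by simp
    then obtain b where "R = {#b#}" using sR by (metis size_1_singleton_mset)
    then show ?thesis using L False by simp
  qed
  have "sum_sq_eigs A = Re ((coeff q (p - 1))^2 - 2 * (if p \<ge> 2 then coeff q (p - 2) else 0))"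
    unfolding sum_sq_eigs_def Let_def q_def[symmetric] S main by simp
  also have "\<dots> = (coeff (charpoly A) (p - 1))^2 - 2 * (if p \<ge> 2 then coeff (charpoly A) (p - 2) else 0)"
    unfolding cq by (simp add: power2_eq_square)
  finally show ?thesis by (simp add: p_def)
qed

lemma tendsto_sum_sq_eigs:
  assumes "(G \<longlongrightarrow> (A::real^'n::finite^'n)) F"
  shows "((\<lambda>x. sum_sq_eigs (G x)) \<longlongrightarrow> sum_sq_eigs A) F"
proof -
  have h: "((\<lambda>x. if b then coeff (charpoly (G x)) k else 0) \<longlongrightarrow> (if b then coeff (charpoly A) k else 0)) F" for b k
    by (cases b) (simp_all add: tendsto_charpoly_coeff assms)
  show ?thesis
  unfolding sum_sq_eigs_formula
  by (intro tendsto_intros tendsto_charpoly_coeff assms h)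
qed

lemma matrix_inv_props:
  fixes A :: "'a::semiring_1^'n^'m"
  assumes "invertible A"
  shows "A ** matrix_inv A = mat 1" "matrix_inv A ** A = mat 1"
  using someI_ex[OF assms[unfolded invertible_def]] unfolding matrix_inv_def by auto

lemma matrix_inv_unique:
  fixes A :: "'a::comm_ring_1^'n^'n"
  assumes "A ** B = mat 1" "B ** A = mat 1"
  shows "matrix_inv A = B"
proof -
  have inv: "invertible A" using assms unfolding invertible_def by blast
  have "matrix_inv A = matrix_inv A ** (A ** B)" using assms by (simp add: matrix_mul_rid)
  also have "\<dots> = (matrix_inv A ** A) ** B" by (simp add: matrix_mul_assoc)
  also have "\<dots> = B" using matrix_inv_props(2)[OF inv] by (simp add: matrix_mul_lid)
  finally show ?thesis .
qed

lemma matrix_inv_formula: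
  fixes A :: "real^'n::finite^'n"
  assumes d: "det A \<noteq> 0"
  shows "matrix_inv A = (\<chi> j k. det (\<chi> i l. if l = j then (if i = k then 1 else 0) else A $ i $ l) / det A)"
proof -
  have inv: "invertible A" using d by (simp add: invertible_det_nz)
  have "matrix_inv A $ j $ k = det (\<chi> i l. if l = j then (if i = k then 1 else 0) else A $ i $ l) / det A" for j k
  proof -
    define x where "x = (\<chi> j. matrix_inv A $ j $ k)"
    have "A *v x = (\<chi> i. (A ** matrix_inv A) $ i $ k)"
      by (simp add: x_def matrix_vector_mult_def matrix_matrix_mult_def vec_eq_iff)
    also have "\<dots> = (\<chi> i. if i = k then 1 else (0::real))" using matrix_inv_props(1)[OF inv] by (simp add: mat_def vec_eq_iff)
    finally have "x = (\<chi> m. det(\<chi> i j. if j=m then (\<chi> i. if i = k then 1 else (0::real))$i else A$i$j) / det A)"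
      using cramer[OF d] by blast
    then have "x $ j = det(\<chi> i l. if l=j then (\<chi> i. if i = k then 1 else (0::real))$i else A$i$l) / det A" by simp
    moreover have "(\<chi> i l. if l=j then (\<chi> i. if i = k then 1 else (0::real))$i else A$i$l) = (\<chi> i l. if l = j then (if i = k then 1 else 0) else A$i$l)"
      by (simp add: vec_eq_iff)
    ultimately show ?thesis by (simp add: x_def)
  qed
  then show ?thesis by (simp add: vec_eq_iff)
qed

lemma tendsto_det:
  fixes G :: "'b \<Rightarrow> real^'n::finite^'n"
  assumes "(G \<longlongrightarrow> A) F"
  shows "((\<lambda>x. det (G x)) \<longlongrightarrow> det A) F"
  unfolding det_def by (intro tendsto_intros assms)

lemma tendsto_matrix_inv:
  fixes G :: "'b \<Rightarrow> real^'n::finite^'n"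
  assumes G: "(G \<longlongrightarrow> A) F" and d: "det A \<noteq> 0"
  shows "((\<lambda>x. matrix_inv (G x)) \<longlongrightarrow> matrix_inv A) F"
proof -
  have dG: "((\<lambda>x. det (G x)) \<longlongrightarrow> det A) F" by (rule tendsto_det[OF G])
  have ev: "eventually (\<lambda>x. det (G x) \<noteq> 0) F"
    using tendsto_imp_eventually_ne[OF dG d] .
  have inner: "((\<lambda>x. \<chi> i l. if l = j then (if i = k then 1 else 0) else G x $ i $ l) \<longlongrightarrow>
            (\<chi> i l. if l = j then (if i = k then 1 else 0) else A $ i $ l)) F" for j k
  proof (intro tendsto_vec_lambda)
    fix i l
    show "((\<lambda>x. if l = j then (if i = k then 1 else 0) else G x $ i $ l) \<longlongrightarrow>
          (if l = j then (if i = k then 1 else 0) else A $ i $ l)) F"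
      by (cases "l = j") (simp_all add: tendsto_vec_nth G)
  qed
  have lim: "((\<lambda>x. (\<chi> j k. det (\<chi> i l. if l = j then (if i = k then 1 else 0) else G x $ i $ l) / det (G x)))
     \<longlongrightarrow> (\<chi> j k. det (\<chi> i l. if l = j then (if i = k then 1 else 0) else A $ i $ l) / det A)) F"
    by (intro tendsto_vec_lambda tendsto_divide dG d tendsto_det inner)
  show ?thesis
    using matrix_inv_formula[OF d]
    by (subst tendsto_cong[where g="\<lambda>x. (\<chi> j k. det (\<chi> i l. if l = j then (if i = k then 1 else 0) else G x $ i $ l) / det (G x))"])
       (auto intro!: eventually_mono[OF ev] matrix_inv_formula simp: lim)
qed

lemma tendsto_mmult:
  fixes f :: "'b \<Rightarrow> real^'n::finite^'m::finite" and g :: "'b \<Rightarrow> real^'k::finite^'n"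
  assumes "(f \<longlongrightarrow> a) F" "(g \<longlongrightarrow> b) F"
  shows "((\<lambda>x. f x ** g x) \<longlongrightarrow> a ** b) F"
  unfolding matrix_matrix_mult_def by (intro tendsto_intros assms)

lemma tendsto_transpose:
  fixes f :: "'b \<Rightarrow> real^'n::finite^'m::finite"
  assumes "(f \<longlongrightarrow> a) F"
  shows "((\<lambda>x. transpose (f x)) \<longlongrightarrow> transpose a) F"
  unfolding transpose_def by (intro tendsto_intros assms)

lemma tendsto_kron:
  fixes f :: "'b \<Rightarrow> real^'n::finite^'n" and g :: "'b \<Rightarrow> real^'m::finite^'m"
  assumes "(f \<longlongrightarrow> a) F" "(g \<longlongrightarrow> b) F"
  shows "((\<lambda>x. kron (f x) (g x)) \<longlongrightarrow> kron a b) F"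
  unfolding kron_def by (intro tendsto_intros assms)

lemma tendsto_trace:
  fixes f :: "'b \<Rightarrow> real^'n::finite^'n"
  assumes "(f \<longlongrightarrow> a) F"
  shows "((\<lambda>x. trace (f x)) \<longlongrightarrow> trace a) F"
  unfolding trace_def by (intro tendsto_intros assms)

lemma tendsto_dg:
  fixes f :: "'b \<Rightarrow> real^'n::finite^'n"
  assumes "(f \<longlongrightarrow> a) F"
  shows "((\<lambda>x. dg (f x)) \<longlongrightarrow> dg a) F"
  unfolding dg_def
proof (intro tendsto_vec_lambda)
  fix i j show "((\<lambda>x. if i = j then f x $ i $ j else 0) \<longlongrightarrow> (if i = j then a $ i $ j else 0)) F"
    by (cases "i = j") (simp_all add: tendsto_vec_nth assms)
qed

lemma tendsto_diag_powr:
  fixes f :: "'b \<Rightarrow> real^'n::finite^'n"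
  assumes "(f \<longlongrightarrow> a) F" "\<And>i. a $ i $ i > 0"
  shows "((\<lambda>x. diag_powr (f x) r) \<longlongrightarrow> diag_powr a r) F"
  unfolding diag_powr_def
proof (intro tendsto_vec_lambda)
  fix i j show "((\<lambda>x. if i = j then f x $ i $ i powr r else 0) \<longlongrightarrow> (if i = j then a $ i $ i powr r else 0)) F"
  proof (cases "i = j")
    case True
    have "((\<lambda>x. f x $ i $ i powr r) \<longlongrightarrow> a $ i $ i powr r) F"
      using assms(2)[of i] by (intro tendsto_intros assms(1)) auto
    then show ?thesis using True by simp
  qed simp
qed

lemma pd_invertible:
  fixes S :: "real^'n::finite^'n"
  assumes pd: "\<forall>x. x \<noteq> 0 \<longrightarrow> x \<bullet> (S *v x) > 0"
  shows "invertible S"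
proof -
  have "inj ((*v) S)"
  proof (rule injI)
    fix x y assume "S *v x = S *v y"
    then have "S *v (x - y) = 0" by (simp add: matrix_vector_mult_diff_distrib)
    then show "x = y" using pd[rule_format, of "x - y"] by auto
  qed
  then show ?thesis using invertible_left_inverse matrix_left_invertible_injective by blast
qed

lemma pd_inv_diag_pos:
  fixes S :: "real^'n::finite^'n"
  assumes pd: "\<forall>x. x \<noteq> 0 \<longrightarrow> x \<bullet> (S *v x) > 0"
  shows "matrix_inv S $ i $ i > 0"
proof -
  have inv: "invertible S" by (rule pd_invertible[OF pd])
  define e where "e = (\<chi> j. if j = i then 1 else (0::real))"
  define x where "x = matrix_inv S *v e"
  have Sx: "S *v x = e" unfolding x_def matrix_vector_mul_assoc matrix_inv_props(1)[OF inv]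
    by (simp add: matrix_vector_mul_lid)
  have "e \<noteq> 0" by (simp add: e_def vec_eq_iff)
  then have "x \<noteq> 0" using Sx by auto
  then have "x \<bullet> (S *v x) > 0" using pd by auto
  moreover have "x \<bullet> (S *v x) = matrix_inv S $ i $ i"
    unfolding Sx by (simp add: x_def e_def inner_vec_def matrix_vector_mult_def if_distrib cong: if_cong)
  ultimately show ?thesis by simp
qed

lemma sum_pairs: "(\<Sum>k\<in>(UNIV::('a::finite\<times>'b::finite) set). f (fst k) (snd k)) = (\<Sum>i\<in>UNIV. \<Sum>j\<in>UNIV. f i j)"
  by (simp add: sum.cartesian_product case_prod_beta UNIV_Times_UNIV[symmetric] del: UNIV_Times_UNIV)

lemma kron_mult: "kron A B ** kron C D = kron (A ** C) (B ** D)"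
proof -
  have "(kron A B ** kron C D) $ r $ c = kron (A ** C) (B ** D) $ r $ c" for r c
  proof -
    have "(kron A B ** kron C D) $ r $ c = (\<Sum>k\<in>UNIV. (A $ fst r $ fst k * C $ fst k $ fst c) * (B $ snd r $ snd k * D $ snd k $ snd c))"
      unfolding kron_def matrix_matrix_mult_def by (simp add: algebra_simps)
    also have "\<dots> = (\<Sum>i\<in>UNIV. \<Sum>j\<in>UNIV. (A $ fst r $ i * C $ i $ fst c) * (B $ snd r $ j * D $ j $ snd c))"
      by (rule sum_pairs)
    also have "\<dots> = kron (A ** C) (B ** D) $ r $ c"
      unfolding kron_def matrix_matrix_mult_def by (simp add: sum_product)
    finally show ?thesis .
  qed
  then show ?thesis by (simp add: vec_eq_iff)
qed

lemma kron_one: "kron (mat 1 :: real^'n::finite^'n) (mat 1 :: real^'m::finite^'m) = mat 1"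
  by (auto simp: kron_def mat_def vec_eq_iff prod_eq_iff)

lemma kron_invertible:
  fixes S :: "real^'n::finite^'n"
  assumes "invertible S"
  shows "invertible (kron S S)"
  unfolding invertible_def
  using matrix_inv_props[OF assms] by (intro exI[of _ "kron (matrix_inv S) (matrix_inv S)"]) (simp add: kron_mult kron_one)

lemma dg_pos_invertible:
  fixes P :: "real^'n::finite^'n"
  assumes "\<And>i. P $ i $ i > 0"
  shows "invertible (dg P)"
proof -
  define Q where "Q = (\<chi> i j. if i = j then 1 / P $ i $ i else (0::real))"
  have h: "(\<Sum>k\<in>UNIV. (if i = k then f k else 0) * g k) = f i * (g i :: real)" for i :: 'n and f g
  proof -
    have "\<And>k. (if i = k then f k else 0) * g k = (if i = k then f k * g k else 0)" by simp
    then show ?thesis by simp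
  qed
  have "dg P ** Q = mat 1" "Q ** dg P = mat 1"
    using assms unfolding dg_def Q_def matrix_matrix_mult_def mat_def
    by (simp_all add: vec_eq_iff h less_imp_neq[symmetric])
  then show ?thesis unfolding invertible_def by blast
qed

definition TrU :: "real^'p::finite^'p \<Rightarrow> real" where
  "TrU S = trace (transpose (Umat S) ** Vstar S ** Umat S)"

definition cE :: "real^'p::finite^'p \<Rightarrow> real" where
  "cE S = sum_sq_eigs (Omega_of S) - real CARD('p)"

lemma rho_star_alt: "rho_star S n = (TrU S / real n) / (TrU S / real n + cE S)"
  by (simp add: rho_star_def trSigOmega_def TrU_def cE_def)

lemma tendsto_TrU_cE:
  fixes Sigma :: "real^'n::finite^'n"
  assumes pd: "\<forall>x. x \<noteq> 0 \<longrightarrow> x \<bullet> (Sigma *v x) > 0"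
  assumes G: "(G \<longlongrightarrow> Sigma) F"
  shows "((\<lambda>x. TrU (G x)) \<longlongrightarrow> TrU Sigma) F" "((\<lambda>x. cE (G x)) \<longlongrightarrow> cE Sigma) F"
proof -
  have inv: "invertible Sigma" by (rule pd_invertible[OF pd])
  have d1: "det Sigma \<noteq> 0" using inv by (simp add: invertible_det_nz)
  have d2: "det (kron Sigma Sigma) \<noteq> 0" using kron_invertible[OF inv] by (simp add: invertible_det_nz)
  have pos: "\<And>i. dg (matrix_inv Sigma) $ i $ i > 0" using pd_inv_diag_pos[OF pd] by (simp add: dg_def)
  have d3: "det (dg (matrix_inv Sigma)) \<noteq> 0"
    using dg_pos_invertible[of "matrix_inv Sigma"] pd_inv_diag_pos[OF pd] by (simp add: invertible_det_nz)
  have P: "((\<lambda>x. matrix_inv (G x)) \<longlongrightarrow> matrix_inv Sigma) F" by (rule tendsto_matrix_inv[OF G d1])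
  have Pd: "((\<lambda>x. dg (matrix_inv (G x))) \<longlongrightarrow> dg (matrix_inv Sigma)) F" by (rule tendsto_dg[OF P])
  have Ph: "((\<lambda>x. diag_powr (dg (matrix_inv (G x))) (-1/2)) \<longlongrightarrow> diag_powr (dg (matrix_inv Sigma)) (-1/2)) F"
    by (rule tendsto_diag_powr[OF Pd pos])
  have Om: "((\<lambda>x. Omega_of (G x)) \<longlongrightarrow> Omega_of Sigma) F"
    unfolding Omega_of_def Let_def by (intro tendsto_mmult Ph P)
  show "((\<lambda>x. cE (G x)) \<longlongrightarrow> cE Sigma) F"
    unfolding cE_def by (intro tendsto_intros tendsto_sum_sq_eigs Om)
  have U: "((\<lambda>x. Umat (G x)) \<longlongrightarrow> Umat Sigma) F"
    unfolding Umat_def Let_def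
    by (intro tendsto_mmult tendsto_matrix_inv tendsto_kron G d2 d3 tendsto_intros Ph Om Pd)
  have V: "((\<lambda>x. Vstar (G x)) \<longlongrightarrow> Vstar Sigma) F"
    unfolding Vstar_def by (intro tendsto_mmult tendsto_kron G tendsto_const)
  show "((\<lambda>x. TrU (G x)) \<longlongrightarrow> TrU Sigma) F"
    unfolding TrU_def by (intro tendsto_trace tendsto_mmult tendsto_transpose U V)
qed

lemma norm_mat_le: "norm (A :: real^'n::finite^'m::finite) \<le> (\<Sum>i\<in>UNIV. \<Sum>j\<in>UNIV. \<bar>A $ i $ j\<bar>)"
proof -
  have "norm A \<le> (\<Sum>i\<in>UNIV. norm (A $ i))"
    unfolding norm_vec_def by (rule L2_set_le_sum) simp
  also have "\<dots> \<le> (\<Sum>i\<in>UNIV. \<Sum>j\<in>UNIV. \<bar>A $ i $ j\<bar>)"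
    by (intro sum_mono norm_le_l1_cart)
  finally show ?thesis .
qed

lemma cont_entrywise:
  fixes Sigma :: "real^'n::finite^'n"
  assumes pd: "\<forall>x. x \<noteq> 0 \<longrightarrow> x \<bullet> (Sigma *v x) > 0" and e: "e > 0"
  shows "\<exists>d>0. \<forall>S. (\<forall>i j. \<bar>S $ i $ j - Sigma $ i $ j\<bar> < d) \<longrightarrow>
            \<bar>TrU S - TrU Sigma\<bar> < e \<and> \<bar>cE S - cE Sigma\<bar> < e"
proof -
  have L1: "TrU \<midarrow>Sigma\<rightarrow> TrU Sigma" and L2: "cE \<midarrow>Sigma\<rightarrow> cE Sigma"
    using tendsto_TrU_cE[OF pd, of "\<lambda>x. x" "at Sigma"] by (auto intro: tendsto_ident_at)
  obtain s1 where s1: "s1 > 0" "\<And>x. x \<noteq> Sigma \<Longrightarrow> norm (x - Sigma) < s1 \<Longrightarrow> norm (TrU x - TrU Sigma) < e"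
    using L1[unfolded LIM_eq] e by meson
  obtain s2 where s2: "s2 > 0" "\<And>x. x \<noteq> Sigma \<Longrightarrow> norm (x - Sigma) < s2 \<Longrightarrow> norm (cE x - cE Sigma) < e"
    using L2[unfolded LIM_eq] e by meson
  define N where "N = real (CARD('n) * CARD('n))"
  have N: "N > 0" by (simp add: N_def)
  define d where "d = min s1 s2 / N"
  have d: "d > 0" using s1 s2 N by (simp add: d_def)
  show ?thesis
  proof (rule exI[of _ d], rule conjI[OF d], intro allI impI)
    fix S :: "real^'n^'n" assume H: "\<forall>i j. \<bar>S $ i $ j - Sigma $ i $ j\<bar> < d"
    have "norm (S - Sigma) \<le> (\<Sum>i\<in>UNIV. \<Sum>j\<in>UNIV. \<bar>(S - Sigma) $ i $ j\<bar>)" by (rule norm_mat_le)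
    also have "\<dots> \<le> (\<Sum>i\<in>(UNIV::'n set). \<Sum>j\<in>(UNIV::'n set). d)"
      using H by (intro sum_mono) (simp add: less_imp_le)
    also have "\<dots> = N * d" by (simp add: N_def)
    also have "\<dots> = min s1 s2" using N by (simp add: d_def)
    finally have nS: "norm (S - Sigma) \<le> min s1 s2" .
    have "norm (S - Sigma) < min s1 s2 \<or> S = Sigma \<or> norm (S - Sigma) = min s1 s2" using nS by auto
    show "\<bar>TrU S - TrU Sigma\<bar> < e \<and> \<bar>cE S - cE Sigma\<bar> < e"
    proof (cases "S = Sigma")
      case True then show ?thesis using e by simp
    next
      case False
      have "norm (S - Sigma) < min s1 s2"
      proof -
        obtain i j where "\<bar>S $ i $ j - Sigma $ i $ j\<bar> \<noteq> 0" using False by (metis abs_0_eq eq_iff_diff_eq_0 vec_eq_iff)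
        have "(\<Sum>i\<in>UNIV. \<Sum>j\<in>UNIV. \<bar>(S - Sigma) $ i $ j\<bar>) < (\<Sum>i\<in>(UNIV::'n set). \<Sum>j\<in>(UNIV::'n set). d)"
          using H by (intro sum_strict_mono sum_mono) (auto simp: less_imp_le)
        then show ?thesis using norm_mat_le[of "S - Sigma"] N by (simp add: N_def d_def)
      qed
      then show ?thesis using s1 s2 False by auto
    qed
  qed
qed

lemma same_sign_abs_add: "(x::real) * y \<ge> 0 \<Longrightarrow> \<bar>x + y\<bar> = \<bar>x\<bar> + \<bar>y\<bar>"
  by (auto simp: abs_if zero_le_mult_iff)

lemma rho_signs:
  fixes T c :: real
  assumes "0 < (T / 1) / (T / 1 + c)" "(T / 1) / (T / 1 + c) < 1"
  shows "T * c > 0"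
proof -
  have "T + c \<noteq> 0" using assms by auto
  show ?thesis
  proof (cases "T + c > 0")
    case True
    then have "T > 0" using assms by (simp add: zero_less_divide_iff)
    moreover have "T < T + c" using assms True by (simp add: divide_less_eq)
    ultimately show ?thesis by simp
  next
    case False
    then have n: "T + c < 0" using \<open>T + c \<noteq> 0\<close> by simp
    then have "T < 0" using assms by (simp add: zero_less_divide_iff)
    moreover have "T > T + c" using assms n by (simp add: divide_less_eq)
    ultimately show ?thesis by (simp add: mult_neg_neg)
  qed
qed

lemma rho_diff_bound:
  fixes T c :: real
  assumes Tc: "T * c > 0" and e: "e > 0"
  shows "\<exists>eta>0. \<forall>T' c' (n::nat). \<bar>T' - T\<bar> < eta \<longrightarrow> \<bar>c' - c\<bar> < eta \<longrightarrow> n \<ge> 1 \<longrightarrow>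
     \<bar>real n * ((T' / real n) / (T' / real n + c') - (T / real n) / (T / real n + c))\<bar> < e"
proof -
  have cT: "c \<noteq> 0" "T \<noteq> 0" using Tc by auto
  define eta where "eta = min (min \<bar>T\<bar> \<bar>c\<bar> / 2) (e * c^2 / (4 * (\<bar>c\<bar> + \<bar>T\<bar>)))"
  have eta: "eta > 0" using cT e by (simp add: eta_def)
  show ?thesis
  proof (rule exI[of _ eta], rule conjI[OF eta], intro allI impI)
    fix T' c' :: real and n :: nat
    assume h1: "\<bar>T' - T\<bar> < eta" and h2: "\<bar>c' - c\<bar> < eta" and n: "n \<ge> 1"
    have n0: "real n > 0" using n by simp
    have "eta \<le> min \<bar>T\<bar> \<bar>c\<bar> / 2" unfolding eta_def by (rule min.cobounded1)
    then have eT: "eta \<le> \<bar>T\<bar> / 2" "eta \<le> \<bar>c\<bar> / 2" by linarith+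
    have sT: "T' * T > 0" using h1 eT cT by (cases "T > 0") (auto simp: abs_if mult_pos_pos mult_neg_neg split: if_splits)
    have sc: "c' * c > 0" using h2 eT cT by (cases "c > 0") (auto simp: abs_if mult_pos_pos mult_neg_neg split: if_splits)
    have c'b: "\<bar>c'\<bar> \<ge> \<bar>c\<bar> / 2" using h2 eT by linarith
    have s1: "(T / real n) * c \<ge> 0" using Tc n0 by (simp add: less_imp_le)
    have s2: "(T' / real n) * c' \<ge> 0"
    proof -
      have "(T' * c') * (T * c) = (T' * T) * (c' * c)" by (simp add: algebra_simps)
      also have "\<dots> > 0" using sT sc by (rule mult_pos_pos)
      finally have "(T' * c') * (T * c) > 0" .
      then have "T' * c' > 0" using Tc by (simp add: zero_less_mult_iff)
      then show ?thesis using n0 by (simp add: less_imp_le)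
    qed
    have D1: "\<bar>T / real n + c\<bar> \<ge> \<bar>c\<bar>" using same_sign_abs_add[OF s1] by simp
    have D2: "\<bar>T' / real n + c'\<bar> \<ge> \<bar>c\<bar> / 2"
    proof -
      have "\<bar>T'\<bar> / real n \<ge> 0" by simp
      moreover have "\<bar>T' / real n\<bar> = \<bar>T'\<bar> / real n" using n0 by simp
      ultimately show ?thesis using same_sign_abs_add[OF s2] c'b by linarith
    qed
    have d1: "T / real n + c \<noteq> 0" using D1 cT by auto
    have d2: "T' / real n + c' \<noteq> 0" using D2 cT by auto
    have eq: "real n * ((T' / real n) / (T' / real n + c') - (T / real n) / (T / real n + c))
        = (T' * c - T * c') / ((T' / real n + c') * (T / real n + c))"
      using d1 d2 n0 by (simp add: field_simps)
    have num: "\<bar>T' * c - T * c'\<bar> \<le> eta * (\<bar>c\<bar> + \<bar>T\<bar>)"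
    proof -
      have "T' * c - T * c' = (T' - T) * c - T * (c' - c)" by (simp add: algebra_simps)
      then have "\<bar>T' * c - T * c'\<bar> \<le> \<bar>T' - T\<bar> * \<bar>c\<bar> + \<bar>T\<bar> * \<bar>c' - c\<bar>"
        by (metis abs_mult abs_triangle_ineq4)
      also have "\<dots> \<le> eta * \<bar>c\<bar> + \<bar>T\<bar> * eta"
        using h1 h2 by (intro add_mono mult_right_mono mult_left_mono) auto
      finally show ?thesis by (simp add: algebra_simps)
    qed
    have den: "\<bar>(T' / real n + c') * (T / real n + c)\<bar> \<ge> c^2 / 2"
    proof -
      have "\<bar>c\<bar> / 2 * \<bar>c\<bar> \<le> \<bar>T' / real n + c'\<bar> * \<bar>T / real n + c\<bar>"
        using D1 D2 by (intro mult_mono) auto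
      then show ?thesis by (simp add: abs_mult power2_eq_square)
    qed
    have cpos: "c^2 / 2 > 0" using cT by simp
    have "\<bar>(T' * c - T * c') / ((T' / real n + c') * (T / real n + c))\<bar> \<le> eta * (\<bar>c\<bar> + \<bar>T\<bar>) / (c^2 / 2)"
      unfolding abs_divide using eta by (intro frac_le num den cpos) auto
    also have "\<dots> \<le> (e * c^2 / (4 * (\<bar>c\<bar> + \<bar>T\<bar>))) * (\<bar>c\<bar> + \<bar>T\<bar>) / (c^2 / 2)"
      using cT by (intro divide_right_mono mult_right_mono) (auto simp: eta_def)
    also have "\<dots> = e / 2"
    proof -
      have ct: "\<bar>c\<bar> + \<bar>T\<bar> > 0" using cT by simp
      have c2: "c^2 > 0" using cT by simp
      have h1: "e * c^2 / (4 * (\<bar>c\<bar> + \<bar>T\<bar>)) * (\<bar>c\<bar> + \<bar>T\<bar>) = e * c^2 / 4" using ct by (simp add: field_simps)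
      have h2: "(e * c^2 / 4) / (c^2 / 2) = e / 2" using c2 by (simp add: field_simps)
      show ?thesis unfolding h1 by (rule h2)
    qed
    also have "\<dots> < e" using e by simp
    finally show "\<bar>real n * ((T' / real n) / (T' / real n + c') - (T / real n) / (T / real n + c))\<bar> < e"
      unfolding eq .
  qed
qed

lemma exp_ge_pow_fact:
  fixes y :: real assumes y: "0 \<le> y"
  shows "y ^ n / fact n \<le> exp y"
proof -
  obtain t where t: "exp y = (\<Sum>m<Suc n. y ^ m / fact m) + (exp t / fact (Suc n)) * y ^ Suc n"
    using Maclaurin_exp_le[of y "Suc n"] by blast
  have "y ^ n / fact n \<le> (\<Sum>m<Suc n. y ^ m / fact m)"
    using y by (intro member_le_sum) auto
  also have "\<dots> \<le> exp y" unfolding t using y by simp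
  finally show ?thesis .
qed

lemma exp_abs_le: "exp \<bar>x::real\<bar> \<le> exp x + exp (-x)"
  by (cases "x \<ge> 0") (auto simp: add_increasing add_increasing2 less_imp_le)

lemma pow_le_exps:
  fixes x :: real
  shows "\<bar>x\<bar> ^ n \<le> fact n * (exp x + exp (-x))"
proof -
  have "\<bar>x\<bar> ^ n / fact n \<le> exp \<bar>x\<bar>" by (rule exp_ge_pow_fact) simp
  also have "\<dots> \<le> exp x + exp (-x)" by (rule exp_abs_le)
  finally show ?thesis by (simp add: divide_le_eq mult.commute)
qed

lemma cosh_lower: "1 + a^2 / 2 \<le> (exp a + exp (-a)) / (2::real)"
proof -
  obtain t1 where t1: "exp a = (\<Sum>m<4. a ^ m / fact m) + (exp t1 / fact 4) * a ^ 4"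
    using Maclaurin_exp_le[of a 4] by blast
  obtain t2 where t2: "exp (-a) = (\<Sum>m<4. (-a) ^ m / fact m) + (exp t2 / fact 4) * (-a) ^ 4"
    using Maclaurin_exp_le[of "-a" 4] by blast
  have "(exp a + exp (-a)) / 2 = 1 + a^2/2 + (exp t1 + exp t2) / 48 * a^4"
    unfolding t1 t2 by (simp add: numeral_eq_Suc fact_numeral algebra_simps power2_eq_square)
  moreover have "(exp t1 + exp t2) / 48 * a^4 \<ge> 0" by (simp add: add_pos_pos less_imp_le)
  ultimately show ?thesis by linarith
qed

lemma cosh_upper: "(exp a + exp (-a)) / (2::real) \<le> 1 + a^2 / 2 + a^4 * (exp a + exp (-a)) / 24"
proof -
  obtain t1 where t1: "exp a = (\<Sum>m<4. a ^ m / fact m) + (exp t1 / fact 4) * a ^ 4" "\<bar>t1\<bar> \<le> \<bar>a\<bar>"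
    using Maclaurin_exp_le[of a 4] by blast
  obtain t2 where t2: "exp (-a) = (\<Sum>m<4. (-a) ^ m / fact m) + (exp t2 / fact 4) * (-a) ^ 4" "\<bar>t2\<bar> \<le> \<bar>a\<bar>"
    using Maclaurin_exp_le[of "-a" 4] by auto
  have E: "(exp a + exp (-a)) / 2 = 1 + a^2/2 + (exp t1 + exp t2) / 48 * a^4"
    unfolding t1(1) t2(1) by (simp add: numeral_eq_Suc fact_numeral algebra_simps power2_eq_square)
  have e1: "exp t1 \<le> exp \<bar>a\<bar>" "exp t2 \<le> exp \<bar>a\<bar>" using t1(2) t2(2) by auto
  have "exp t1 \<le> exp a + exp (-a)" "exp t2 \<le> exp a + exp (-a)"
    using e1 exp_abs_le[of a] by (meson order_trans)+
  from add_mono[OF this] have "(exp t1 + exp t2) / 48 \<le> (exp a + exp (-a)) / 24" by simp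
  then have "(exp t1 + exp t2) / 48 * a^4 \<le> (exp a + exp (-a)) / 24 * a^4"
    by (rule mult_right_mono) simp
  then have R: "(exp t1 + exp t2) / 48 * a^4 \<le> a^4 * (exp a + exp (-a)) / 24" by (simp add: mult.commute)
  show ?thesis using E R by linarith
qed

lemma small_eps_le:
  fixes x y C d :: real
  assumes d: "d > 0" and H: "\<And>u. 0 < u \<Longrightarrow> u \<le> d \<Longrightarrow> x \<le> y + u * C"
  shows "x \<le> y"
proof (rule ccontr)
  assume "\<not> x \<le> y"
  then have g: "x - y > 0" by simp
  define u where "u = min d ((x - y) / (2 * (\<bar>C\<bar> + 1)))"
  have u: "0 < u" "u \<le> d" using d g by (auto simp: u_def)
  have "u * C \<le> u * \<bar>C\<bar>" using u by (simp add: mult_left_mono)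
  also have "\<dots> \<le> (x - y) / (2 * (\<bar>C\<bar> + 1)) * \<bar>C\<bar>"
    by (intro mult_right_mono) (auto simp: u_def)
  also have "\<dots> < x - y"
  proof -
    have "\<bar>C\<bar> / (2 * (\<bar>C\<bar> + 1)) < 1" by (simp add: divide_less_eq)
    then have "(x - y) * (\<bar>C\<bar> / (2 * (\<bar>C\<bar> + 1))) < (x - y) * 1"
      using g by (intro mult_strict_left_mono) auto
    then show ?thesis by simp
  qed
  finally show False using H[OF u] by simp
qed

lemma inner_mv_transpose: "(A *v x) \<bullet> y = x \<bullet> (transpose A *v (y::real^'n::finite))"
  unfolding inner_vec_def matrix_vector_mult_def transpose_def
  by (simp add: sum_distrib_left sum_distrib_right algebra_simps, subst sum.swap, simp)

lemma continuous_mvn_density: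
  "continuous_on UNIV (mvn_density mu S)"
  unfolding mvn_density_def inner_vec_def matrix_vector_mult_def divide_inverse
  by (intro continuous_intros)

lemma mvn_shift:
  fixes Sigma :: "real^'n::finite^'n"
  assumes sym: "transpose Sigma = Sigma" and inv: "invertible Sigma"
  shows "mvn_density mu Sigma x * exp (t \<bullet> (x - mu)) = exp ((t \<bullet> (Sigma *v t)) / 2) * mvn_density mu Sigma (x - Sigma *v t)"
proof -
  define P where "P = matrix_inv Sigma"
  have SP: "Sigma ** P = mat 1" using matrix_inv_props[OF inv] by (simp add: P_def)
  define y where "y = x - mu"
  define v where "v = Sigma *v t"
  have q: "(y - v) \<bullet> (P *v (y - v)) = y \<bullet> (P *v y) - 2 * (t \<bullet> y) + t \<bullet> (Sigma *v t)"
  proof -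
    have a: "v \<bullet> (P *v y) = t \<bullet> y"
      unfolding v_def inner_mv_transpose sym matrix_vector_mul_assoc SP matrix_vector_mul_lid ..
    have b: "y \<bullet> (P *v v) = t \<bullet> y"
    proof -
      have "y \<bullet> (P *v v) = (transpose P *v y) \<bullet> v" using inner_mv_transpose[of "transpose P" y v] by simp
      also have "transpose P = P"
      proof -
        have "transpose P ** Sigma = mat 1" using SP by (metis matrix_transpose_mul sym transpose_mat)
        moreover have "Sigma ** transpose P = mat 1"
          using matrix_inv_props(2)[OF inv] by (metis matrix_transpose_mul sym transpose_mat P_def)
        ultimately have "matrix_inv Sigma = transpose P" using matrix_inv_unique by blast
        then show ?thesis by (simp add: P_def)
      qed
      also have "(P *v y) \<bullet> v = v \<bullet> (P *v y)" by (simp add: inner_commute)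
      finally show ?thesis using a by simp
    qed
    have c1: "v \<bullet> (P *v v) = t \<bullet> (Sigma *v (P *v v))"
      unfolding v_def inner_mv_transpose sym ..
    have c2: "Sigma *v (P *v v) = v" by (simp add: matrix_vector_mul_assoc SP matrix_vector_mul_lid)
    have c: "v \<bullet> (P *v v) = t \<bullet> (Sigma *v t)" using c1 c2 by (simp add: v_def)
    show ?thesis
      by (simp add: matrix_vector_mult_diff_distrib inner_diff_left inner_diff_right a b c algebra_simps)
  qed
  have xv: "x - Sigma *v t - mu = y - v" by (simp add: y_def v_def algebra_simps)
  define K where "K = sqrt ((2 * pi) ^ CARD('n) * det Sigma)"
  have e: "- (1/2) * (y \<bullet> (P *v y)) + t \<bullet> y = (t \<bullet> (Sigma *v t)) / 2 + (- (1/2) * ((y - v) \<bullet> (P *v (y - v))))"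
    unfolding q by (simp add: algebra_simps)
  have "mvn_density mu Sigma x * exp (t \<bullet> (x - mu)) = exp (- (1/2) * (y \<bullet> (P *v y)) + t \<bullet> y) / K"
    unfolding mvn_density_def P_def[symmetric] y_def[symmetric] K_def[symmetric] exp_add by simp
  also have "\<dots> = exp ((t \<bullet> (Sigma *v t)) / 2) * (exp (- (1/2) * ((y - v) \<bullet> (P *v (y - v)))) / K)"
    unfolding e exp_add by simp
  also have "\<dots> = exp ((t \<bullet> (Sigma *v t)) / 2) * mvn_density mu Sigma (x - Sigma *v t)"
    unfolding mvn_density_def P_def[symmetric] xv K_def[symmetric] ..
  finally show ?thesis .
qed

lemma (in prob_space) gauss_moments:
  fixes Z :: "'a \<Rightarrow> real" and q :: real
  assumes Zm[measurable]: "Z \<in> borel_measurable M" and q: "q \<ge> 0"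
    and mi: "\<And>s. integrable M (\<lambda>\<omega>. exp (s * Z \<omega>))"
    and me: "\<And>s. expectation (\<lambda>\<omega>. exp (s * Z \<omega>)) = exp (s^2 * q / 2)"
  shows "integrable M Z" "expectation Z = 0" "integrable M (\<lambda>\<omega>. (Z \<omega>)^2)"
    "expectation (\<lambda>\<omega>. (Z \<omega>)^2) = q" "integrable M (\<lambda>\<omega>. (Z \<omega>)^4)"
proof -
  have i1: "integrable M (\<lambda>\<omega>. exp (Z \<omega>))" using mi[of 1] by simp
  have i2: "integrable M (\<lambda>\<omega>. exp (- Z \<omega>))" using mi[of "-1"] by simp
  have iB: "integrable M (\<lambda>\<omega>. fact n * (exp (Z \<omega>) + exp (- Z \<omega>)))" for n
    using i1 i2 by (intro integrable_mult_right Bochner_Integration.integrable_add)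
  have ipow: "integrable M (\<lambda>\<omega>. (Z \<omega>)^n)" for n
  proof (rule Bochner_Integration.integrable_bound[OF iB[of n]])
    show "(\<lambda>\<omega>. (Z \<omega>)^n) \<in> borel_measurable M" by measurable
    show "AE x in M. norm ((Z x)^n) \<le> norm (fact n * (exp (Z x) + exp (- Z x)))"
      using pow_le_exps by (auto simp: power_abs intro: order_trans[OF _ abs_ge_self])
  qed
  show iZ: "integrable M Z" using ipow[of 1] by simp
  show iZ2: "integrable M (\<lambda>\<omega>. (Z \<omega>)^2)" by (rule ipow)
  show "integrable M (\<lambda>\<omega>. (Z \<omega>)^4)" by (rule ipow)
  have low1: "1 + s * expectation Z \<le> exp (s^2 * q / 2)" for s
  proof -
    have "expectation (\<lambda>\<omega>. 1 + s * Z \<omega>) \<le> expectation (\<lambda>\<omega>. exp (s * Z \<omega>))"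
      using iZ mi by (intro integral_mono) (auto simp: exp_ge_add_one_self)
    then show ?thesis using iZ by (simp add: me prob_space)
  qed
  define d where "d = 1 / (q + 1)"
  have d: "d > 0" "d \<le> 1" using q by (auto simp: d_def)
  have small: "u^2 * q / 2 \<le> 1" if "0 < u" "u \<le> d" for u
  proof -
    have "u \<le> 1" using that d by simp
    then have "u^2 \<le> u" using that by (simp add: power2_eq_square mult_left_le_one_le)
    also have "u \<le> 1 / (q + 1)" using that by (simp add: d_def)
    finally have "u^2 * (q + 1) \<le> 1" using q by (simp add: le_divide_eq)
    moreover have "u^2 * q \<le> u^2 * (q + 1)" by (intro mult_left_mono) auto
    ultimately show ?thesis by linarith
  qed
  have expb: "exp (u^2 * q / 2) \<le> 1 + u^2 * q / 2 + (u^2 * q / 2)^2" if "0 < u" "u \<le> d" for u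
    using small[OF that] q by (intro exp_bound) auto
  have expb2: "exp (u^2 * q / 2) \<le> 1 + u^2 * q" if "0 < u" "u \<le> d" for u
  proof -
    have b0: "u^2 * q / 2 \<ge> 0" using q by simp
    have "(u^2 * q / 2) * (u^2 * q / 2) \<le> (u^2 * q / 2) * 1"
      using small[OF that] b0 by (intro mult_left_mono) auto
    then have "(u^2 * q / 2)^2 \<le> u^2 * q / 2" by (simp add: power2_eq_square)
    then show ?thesis using expb[OF that] by simp
  qed
  have "expectation Z \<le> 0"
  proof (rule small_eps_le[OF d(1), of _ _ q])
    fix u assume u: "0 < u" "u \<le> d"
    have "u * expectation Z \<le> u * (u * q)"
      using low1[of u] expb2[OF u] by (simp add: power2_eq_square algebra_simps)
    then show "expectation Z \<le> 0 + u * q" using u by simp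
  qed
  moreover have "- expectation Z \<le> 0"
  proof (rule small_eps_le[OF d(1), of _ _ q])
    fix u assume u: "0 < u" "u \<le> d"
    have "u * (- expectation Z) \<le> u * (u * q)"
      using low1[of "-u"] expb2[OF u] by (simp add: power2_eq_square algebra_simps)
    then have "- expectation Z \<le> u * q" using u(1) by (rule mult_left_le_imp_le)
    then show "- expectation Z \<le> 0 + u * q" by simp
  qed
  ultimately show "expectation Z = 0" by simp
  define m2 where "m2 = expectation (\<lambda>\<omega>. (Z \<omega>)^2)"
  have cosh_int: "integrable M (\<lambda>\<omega>. (exp (s * Z \<omega>) + exp (- (s * Z \<omega>))) / 2)" for s
    using mi[of s] mi[of "-s"] by (intro integrable_divide Bochner_Integration.integrable_add) auto
  have cosh_exp: "expectation (\<lambda>\<omega>. (exp (s * Z \<omega>) + exp (- (s * Z \<omega>))) / 2) = exp (s^2 * q / 2)" for s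
    using mi[of s] mi[of "-s"] me[of s] me[of "-s"] by simp
  have low2: "1 + s^2 * m2 / 2 \<le> exp (s^2 * q / 2)" for s
  proof -
    have "expectation (\<lambda>\<omega>. 1 + s^2 * (Z \<omega>)^2 / 2) \<le> expectation (\<lambda>\<omega>. (exp (s * Z \<omega>) + exp (- (s * Z \<omega>))) / 2)"
    proof (intro integral_mono iZ2 cosh_int Bochner_Integration.integrable_add integrable_mult_right integrable_divide integrable_const)
      fix x
      have "1 + (s * Z x)^2 / 2 \<le> (exp (s * Z x) + exp (- (s * Z x))) / 2" by (rule cosh_lower)
      then show "1 + s^2 * (Z x)^2 / 2 \<le> (exp (s * Z x) + exp (- (s * Z x))) / 2" by (simp add: power_mult_distrib)
    qed
    moreover have "expectation (\<lambda>\<omega>. 1 + s^2 * (Z \<omega>)^2 / 2) = 1 + s^2 * m2 / 2"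
      using iZ2 by (simp add: prob_space m2_def)
    ultimately show ?thesis unfolding cosh_exp by simp
  qed
  have iE2: "integrable M (\<lambda>\<omega>. exp (2 * Z \<omega>) + exp (- (2 * Z \<omega>)))"
    using mi[of 2] mi[of "-2"] by (intro Bochner_Integration.integrable_add) auto
  have E2: "expectation (\<lambda>\<omega>. exp (2 * Z \<omega>) + exp (- (2 * Z \<omega>))) = 2 * exp (2 * q)"
    using mi[of 2] mi[of "-2"] me[of 2] me[of "-2"] by simp
  have pw: "(exp (s * z) + exp (- (s * z))) / 2 \<le> 1 + s^2 * z^2 / 2 + s^4 * (2 * (exp (2 * z) + exp (- (2 * z))))"
    if s: "\<bar>s\<bar> \<le> 1" for s z :: real
  proof -
    have a: "exp (s * z) + exp (- (s * z)) \<le> 2 * exp \<bar>z\<bar>"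
    proof -
      have "\<bar>s * z\<bar> \<le> \<bar>z\<bar>" using s by (simp add: abs_mult mult_left_le_one_le)
      then have "exp (s * z) \<le> exp \<bar>z\<bar>" "exp (- (s * z)) \<le> exp \<bar>z\<bar>" by auto
      from add_mono[OF this] show ?thesis by simp
    qed
    have ee: "exp \<bar>z\<bar> * exp \<bar>z\<bar> = exp (2 * \<bar>z\<bar>)" by (simp add: exp_add[symmetric])
    have b: "z^4 \<le> 24 * exp \<bar>z\<bar>" using exp_ge_pow_fact[of "\<bar>z\<bar>" 4] by (simp add: fact_numeral power_abs divide_le_eq mult.commute)
    have "(s * z)^4 * (exp (s * z) + exp (- (s * z))) / 24 \<le> s^4 * (24 * exp \<bar>z\<bar>) * (2 * exp \<bar>z\<bar>) / 24"
    proof -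
      have ab: "z^4 * (exp (s * z) + exp (- (s * z))) \<le> (24 * exp \<bar>z\<bar>) * (2 * exp \<bar>z\<bar>)"
        by (rule mult_mono[OF b a]) auto
      have "s^4 * (z^4 * (exp (s * z) + exp (- (s * z)))) \<le> s^4 * ((24 * exp \<bar>z\<bar>) * (2 * exp \<bar>z\<bar>))"
        by (rule mult_left_mono[OF ab]) simp
      then show ?thesis by (simp add: power_mult_distrib ac_simps)
    qed
    also have "\<dots> = 2 * s^4 * (exp \<bar>z\<bar> * exp \<bar>z\<bar>)" by (simp only: ac_simps)
    also have "\<dots> = 2 * s^4 * exp (2 * \<bar>z\<bar>)" unfolding ee ..
    also have "\<dots> \<le> s^4 * (2 * (exp (2 * z) + exp (- (2 * z))))"
    proof -
      have "exp (2 * \<bar>z\<bar>) \<le> exp (2 * z) + exp (- (2 * z))" using exp_abs_le[of "2 * z"] by (simp add: abs_mult)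
      then have "s^4 * (2 * exp (2 * \<bar>z\<bar>)) \<le> s^4 * (2 * (exp (2 * z) + exp (- (2 * z))))"
        by (intro mult_left_mono) auto
      then show ?thesis by (simp add: ac_simps)
    qed
    finally have "(s * z)^4 * (exp (s * z) + exp (- (s * z))) / 24 \<le> s^4 * (2 * (exp (2 * z) + exp (- (2 * z))))" .
    then show ?thesis using cosh_upper[of "s * z"] by (simp add: power_mult_distrib)
  qed
  have up2: "exp (s^2 * q / 2) \<le> 1 + s^2 * m2 / 2 + s^4 * (4 * exp (2 * q))" if s: "\<bar>s\<bar> \<le> 1" for s
  proof -
    have f1: "integrable M (\<lambda>\<omega>. 1 + s^2 * (Z \<omega>)^2 / 2)"
      using iZ2 by (intro Bochner_Integration.integrable_add integrable_const integrable_divide integrable_mult_right)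
    have f2: "integrable M (\<lambda>\<omega>. s^4 * (2 * (exp (2 * Z \<omega>) + exp (- (2 * Z \<omega>)))))"
      using iE2 by (intro integrable_mult_right)
    have iR: "integrable M (\<lambda>\<omega>. 1 + s^2 * (Z \<omega>)^2 / 2 + s^4 * (2 * (exp (2 * Z \<omega>) + exp (- (2 * Z \<omega>)))))"
      using f1 f2 by (rule Bochner_Integration.integrable_add)
    have "expectation (\<lambda>\<omega>. (exp (s * Z \<omega>) + exp (- (s * Z \<omega>))) / 2) \<le>
          expectation (\<lambda>\<omega>. 1 + s^2 * (Z \<omega>)^2 / 2 + s^4 * (2 * (exp (2 * Z \<omega>) + exp (- (2 * Z \<omega>)))))"
      by (rule integral_mono[OF cosh_int iR pw[OF s]])
    also have "\<dots> = expectation (\<lambda>\<omega>. 1 + s^2 * (Z \<omega>)^2 / 2) + expectation (\<lambda>\<omega>. s^4 * (2 * (exp (2 * Z \<omega>) + exp (- (2 * Z \<omega>)))))"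
      by (rule Bochner_Integration.integral_add[OF f1 f2])
    also have "expectation (\<lambda>\<omega>. 1 + s^2 * (Z \<omega>)^2 / 2) = 1 + s^2 * m2 / 2"
      using iZ2 by (simp add: prob_space m2_def)
    also have "expectation (\<lambda>\<omega>. s^4 * (2 * (exp (2 * Z \<omega>) + exp (- (2 * Z \<omega>))))) = s^4 * (4 * exp (2 * q))"
      using E2 by (simp only: integral_mult_right_zero)
    finally show ?thesis using cosh_exp[of s] by linarith
  qed
  have "m2 \<le> q"
  proof (rule small_eps_le[of "d^2" _ _ "q^2 / 2"])
    show "d^2 > 0" using d by simp
  next
    fix u assume u: "0 < u" "u \<le> d^2"
    define s where "s = sqrt u"
    have "sqrt u \<le> sqrt (d^2)" using u by (intro real_sqrt_le_mono) auto
    then have s: "s^2 = u" "s > 0" "s \<le> d" using u d unfolding s_def by auto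
    have "1 + s^2 * m2 / 2 \<le> 1 + s^2 * q / 2 + (s^2 * q / 2)^2"
      using low2[of s] expb[of s] s by (meson order_trans)
    then have "1 + u * m2 / 2 \<le> 1 + u * q / 2 + (u * q / 2)^2" unfolding s(1) .
    then have "u * m2 \<le> u * (q + u * (q^2 / 2))"
      by (simp add: power2_eq_square algebra_simps)
    then show "m2 \<le> q + u * (q^2 / 2)" using u by simp
  qed
  moreover have "q \<le> m2"
  proof (rule small_eps_le[OF d(1), of _ _ "8 * exp (2 * q)"])
    fix u assume u: "0 < u" "u \<le> d"
    define s where "s = sqrt u"
    have s: "s^2 = u" "\<bar>s\<bar> \<le> 1" using u d unfolding s_def by auto
    have "1 + s^2 * q / 2 \<le> 1 + s^2 * m2 / 2 + s^4 * (4 * exp (2 * q))"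
      using up2[OF s(2)] exp_ge_add_one_self[of "s^2 * q / 2"] by linarith
    moreover have "s^4 = u * u" using s(1) by (metis power2_eq_square power_mult numeral_Bit0 numeral_One mult_2 one_add_one power_add)
    ultimately have "u * q \<le> u * (m2 + u * (8 * exp (2 * q)))"
      using s by (simp add: algebra_simps)
    then show "q \<le> m2 + u * (8 * exp (2 * q))" using u by simp
  qed
  ultimately show "expectation (\<lambda>\<omega>. (Z \<omega>)^2) = q" by (simp add: m2_def)
qed

lemma mvn_mgf:
  fixes Sigma :: "real^'n::finite^'n" and X :: "'a \<Rightarrow> real^'n"
  assumes M: "prob_space M" and sym: "transpose Sigma = Sigma"
    and pd: "\<forall>x. x \<noteq> 0 \<longrightarrow> x \<bullet> (Sigma *v x) > 0"
    and D: "distributed M lborel X (\<lambda>x. ennreal (mvn_density mu Sigma x))"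
  shows "integrable M (\<lambda>\<omega>. exp (t \<bullet> (X \<omega> - mu)))"
    "integral\<^sup>L M (\<lambda>\<omega>. exp (t \<bullet> (X \<omega> - mu))) = exp ((t \<bullet> (Sigma *v t)) / 2)"
proof -
  interpret prob_space M by (rule M)
  have inv: "invertible Sigma" by (rule pd_invertible[OF pd])
  let ?phi = "mvn_density mu Sigma"
  have phim: "?phi \<in> borel_measurable borel"
    by (rule borel_measurable_continuous_onI[OF continuous_mvn_density])
  have Xm: "X \<in> measurable M borel" using distributed_measurable[OF D] by simp
  have N1: "(\<integral>\<^sup>+x. ennreal (?phi x) \<partial>lborel) = 1"
    using distributed_nn_integral[OF D, of "\<lambda>_. 1"] by (simp add: emeasure_space_1)
  define K where "K = sqrt ((2 * pi) ^ CARD('n) * det Sigma)"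
  have phiK: "?phi x = exp (- (1/2) * ((x - mu) \<bullet> (matrix_inv Sigma *v (x - mu)))) / K" for x
    by (simp add: mvn_density_def K_def)
  have Kpos: "K > 0"
  proof (rule ccontr)
    assume "\<not> K > 0"
    then have "\<And>x. ?phi x \<le> 0" unfolding phiK by (simp add: divide_nonneg_nonpos)
    then have "\<And>x. ennreal (?phi x) = 0" by (simp add: ennreal_eq_0_iff)
    then have "(\<integral>\<^sup>+x. ennreal (?phi x) \<partial>lborel) = 0" by simp
    then show False using N1 by simp
  qed
  have phi0: "?phi x \<ge> 0" for x unfolding phiK using Kpos by simp
  have N2: "(\<integral>\<^sup>+x. ennreal (?phi (x + a)) \<partial>lborel) = 1" for a
  proof -
    have "(\<integral>\<^sup>+x. ennreal (?phi x) \<partial>lborel) = (\<integral>\<^sup>+x. ennreal (?phi x) \<partial>distr lborel borel ((+) a))"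
      by (simp add: lborel_distr_plus)
    also have "\<dots> = (\<integral>\<^sup>+x. ennreal (?phi (a + x)) \<partial>lborel)"
      using phim by (subst nn_integral_distr) auto
    finally show ?thesis using N1 by (simp add: add.commute)
  qed
  define c where "c = (t \<bullet> (Sigma *v t)) / 2"
  have gm: "(\<lambda>x. exp (t \<bullet> (x - mu))) \<in> borel_measurable borel"
    by (intro borel_measurable_continuous_onI continuous_intros)
  have "(\<integral>\<^sup>+\<omega>. ennreal (exp (t \<bullet> (X \<omega> - mu))) \<partial>M) = (\<integral>\<^sup>+x. ennreal (?phi x) * ennreal (exp (t \<bullet> (x - mu))) \<partial>lborel)"
    using distributed_nn_integral[OF D, of "\<lambda>x. ennreal (exp (t \<bullet> (x - mu)))"] gm by simp
  also have "\<dots> = (\<integral>\<^sup>+x. ennreal (exp c) * ennreal (?phi (x + (- (Sigma *v t)))) \<partial>lborel)"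
    using mvn_shift[OF sym inv] phi0 by (intro nn_integral_cong) (simp add: ennreal_mult[symmetric] c_def)
  also have "\<dots> = ennreal (exp c) * (\<integral>\<^sup>+x. ennreal (?phi (x + (- (Sigma *v t)))) \<partial>lborel)"
  proof (intro nn_integral_cmult)
    have "(\<lambda>x. ?phi (x + - (Sigma *v t))) \<in> borel_measurable borel"
      by (intro borel_measurable_continuous_onI continuous_on_compose2[OF continuous_mvn_density]) (auto intro!: continuous_intros)
    then show "(\<lambda>x. ennreal (?phi (x + - (Sigma *v t)))) \<in> borel_measurable lborel" by simp
  qed
  also have "\<dots> = ennreal (exp c)" using N2[of "- (Sigma *v t)"] by simp
  finally have NN: "(\<integral>\<^sup>+\<omega>. ennreal (exp (t \<bullet> (X \<omega> - mu))) \<partial>M) = ennreal (exp c)" .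
  have fm: "(\<lambda>\<omega>. exp (t \<bullet> (X \<omega> - mu))) \<in> borel_measurable M"
    using measurable_comp[OF Xm gm] by (simp add: comp_def)
  have "integrable M (\<lambda>\<omega>. exp (t \<bullet> (X \<omega> - mu))) \<and> integral\<^sup>L M (\<lambda>\<omega>. exp (t \<bullet> (X \<omega> - mu))) = exp c"
    using nn_integral_eq_integrable[OF fm, of "exp c"] NN by simp
  then show "integrable M (\<lambda>\<omega>. exp (t \<bullet> (X \<omega> - mu)))"
    "integral\<^sup>L M (\<lambda>\<omega>. exp (t \<bullet> (X \<omega> - mu))) = exp ((t \<bullet> (Sigma *v t)) / 2)"
    by (auto simp: c_def)
qed

lemma (in prob_space) pair_uncorr:
  fixes U :: "nat \<Rightarrow> 'a \<Rightarrow> real"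
  assumes ind: "indep_vars (\<lambda>_. borel) U UNIV" and int: "\<And>k. integrable M (U k)"
    and kl: "k \<noteq> l"
  shows "integrable M (\<lambda>\<omega>. U k \<omega> * U l \<omega>)"
    "expectation (\<lambda>\<omega>. U k \<omega> * U l \<omega>) = expectation (U k) * expectation (U l)"
proof -
  have I: "indep_vars (\<lambda>_. borel) U {k, l}" using indep_vars_subset[OF ind] by auto
  have p: "(\<Prod>i\<in>{k, l}. U i \<omega>) = U k \<omega> * U l \<omega>" for \<omega> using kl by simp
  show "integrable M (\<lambda>\<omega>. U k \<omega> * U l \<omega>)"
    using indep_vars_integrable[OF _ I int] unfolding p by simp
  show "expectation (\<lambda>\<omega>. U k \<omega> * U l \<omega>) = expectation (U k) * expectation (U l)"
    using indep_vars_lebesgue_integral[OF _ I int] kl unfolding p by simp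
qed

lemma (in prob_space) wlln_bound:
  fixes W :: "nat \<Rightarrow> 'a \<Rightarrow> real"
  assumes ind: "indep_vars (\<lambda>_. borel) W UNIV"
    and int2: "\<And>k. integrable M (\<lambda>\<omega>. (W k \<omega>)^2)"
    and mean: "\<And>k. expectation (W k) = m"
    and var: "\<And>k. expectation (\<lambda>\<omega>. (W k \<omega> - m)^2) \<le> V"
    and eta: "eta > 0" and n: "n \<ge> 1"
  shows "prob {\<omega> \<in> space M. eta \<le> \<bar>(1 / real n) * (\<Sum>k<n. W k \<omega>) - m\<bar>} \<le> V / (real n * eta^2)"
proof -
  have Wm[measurable]: "\<And>k. W k \<in> borel_measurable M" using ind unfolding indep_vars_def by auto
  have int1: "integrable M (W k)" for k using square_integrable_imp_integrable[OF Wm int2] .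
  define U where "U k \<omega> = W k \<omega> - m" for k \<omega>
  have Um[measurable]: "U k \<in> borel_measurable M" for k unfolding U_def by measurable
  have indU: "indep_vars (\<lambda>_. borel) U UNIV"
    unfolding U_def by (rule indep_vars_compose2[OF ind, where Y="\<lambda>_ x. x - m"]) auto
  have intU: "integrable M (U k)" for k unfolding U_def using int1[of k] by simp
  have EU: "expectation (U k) = 0" for k unfolding U_def using int1[of k] mean[of k] by (simp add: prob_space)
  have intU2: "integrable M (\<lambda>\<omega>. U k \<omega> * U k \<omega>)" for k
  proof -
    have "(\<lambda>\<omega>. U k \<omega> * U k \<omega>) = (\<lambda>\<omega>. (W k \<omega>)^2 + ((- 2 * m) * W k \<omega> + m^2))"
      by (auto simp: U_def power2_eq_square algebra_simps)
    then show ?thesis using int2[of k] int1[of k]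
      by (simp del: integrable_add add: Bochner_Integration.integrable_add integrable_mult_right)
  qed
  have intUU: "integrable M (\<lambda>\<omega>. U k \<omega> * U l \<omega>)" for k l
    using intU2[of k] pair_uncorr(1)[OF indU intU] by (cases "k = l") auto
  have EUU: "expectation (\<lambda>\<omega>. U k \<omega> * U l \<omega>) = (if k = l then expectation (\<lambda>\<omega>. (W k \<omega> - m)^2) else 0)" for k l
    using pair_uncorr(2)[OF indU intU, of k l] EU by (cases "k = l") (auto simp: U_def power2_eq_square)
  define D where "D \<omega> = (\<Sum>k<n. U k \<omega>)" for \<omega>
  have Dm[measurable]: "D \<in> borel_measurable M" unfolding D_def by measurable
  have D2: "(D \<omega>)^2 = (\<Sum>k<n. \<Sum>l<n. U k \<omega> * U l \<omega>)" for \<omega>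
    unfolding D_def power2_eq_square sum_product ..
  have intD2: "integrable M (\<lambda>\<omega>. (D \<omega>)^2)" unfolding D2 by (intro Bochner_Integration.integrable_sum intUU)
  have ED: "expectation D = 0" unfolding D_def using intU EU by simp
  have ED2: "expectation (\<lambda>\<omega>. (D \<omega>)^2) \<le> real n * V"
  proof -
    have "expectation (\<lambda>\<omega>. (D \<omega>)^2) = (\<Sum>k<n. \<Sum>l<n. expectation (\<lambda>\<omega>. U k \<omega> * U l \<omega>))"
      unfolding D2 using intUU by (simp add: integral_sum integrable_sum)
    also have "\<dots> = (\<Sum>k<n. expectation (\<lambda>\<omega>. (W k \<omega> - m)^2))"
      unfolding EUU by (simp add: sum.delta)
    also have "\<dots> \<le> (\<Sum>k<n. V)" by (intro sum_mono var)
    finally show ?thesis by simp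
  qed
  have nz: "real n * eta > 0" using n eta by simp
  have "prob {\<omega> \<in> space M. real n * eta \<le> \<bar>D \<omega> - expectation D\<bar>} \<le> variance D / (real n * eta)^2"
    by (rule Chebyshev_inequality[OF Dm intD2 nz])
  also have "variance D = expectation (\<lambda>\<omega>. (D \<omega>)^2)" using ED by simp
  also have "expectation (\<lambda>\<omega>. (D \<omega>)^2) / (real n * eta)^2 \<le> real n * V / (real n * eta)^2"
    using ED2 by (intro divide_right_mono) auto
  also have "real n * V / (real n * eta)^2 = V / (real n * eta^2)" using n by (simp add: power2_eq_square)
  finally have C: "prob {\<omega> \<in> space M. real n * eta \<le> \<bar>D \<omega> - expectation D\<bar>} \<le> V / (real n * eta^2)" .
  have "{\<omega> \<in> space M. eta \<le> \<bar>(1 / real n) * (\<Sum>k<n. W k \<omega>) - m\<bar>} = {\<omega> \<in> space M. real n * eta \<le> \<bar>D \<omega> - expectation D\<bar>}"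
  proof -
    have "(1 / real n) * (\<Sum>k<n. W k \<omega>) - m = D \<omega> / real n" for \<omega>
      using n by (simp add: D_def U_def sum_subtractf field_simps)
    moreover have "eta \<le> \<bar>D \<omega> / real n\<bar> \<longleftrightarrow> real n * eta \<le> \<bar>D \<omega>\<bar>" for \<omega>
      using n by (simp add: abs_divide le_divide_eq mult.commute)
    ultimately show ?thesis using ED by simp
  qed
  then show ?thesis using C by simp
qed

lemma cov_alg:
  fixes u v :: "nat \<Rightarrow> real"
  assumes n: "n \<ge> 1"
  shows "(1 / real n) * (\<Sum>k<n. (u k - (1 / real n) * (\<Sum>k<n. u k)) * (v k - (1 / real n) * (\<Sum>k<n. v k)))
       = (1 / real n) * (\<Sum>k<n. u k * v k) - ((1 / real n) * (\<Sum>k<n. u k)) * ((1 / real n) * (\<Sum>k<n. v k))"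
proof -
  define a where "a = (1 / real n) * (\<Sum>k<n. u k)"
  define b where "b = (1 / real n) * (\<Sum>k<n. v k)"
  have su: "(\<Sum>k<n. u k) = real n * a" using n by (simp add: a_def)
  have sv: "(\<Sum>k<n. v k) = real n * b" using n by (simp add: b_def)
  have "(\<Sum>k<n. (u k - a) * (v k - b)) = (\<Sum>k<n. u k * v k) - b * (\<Sum>k<n. u k) - a * (\<Sum>k<n. v k) + real n * a * b"
    by (simp add: algebra_simps sum.distrib sum_subtractf sum_distrib_left sum_distrib_right)
  also have "\<dots> = (\<Sum>k<n. u k * v k) - real n * a * b" unfolding su sv by (simp add: algebra_simps)
  finally have "(\<Sum>k<n. (u k - a) * (v k - b)) = (\<Sum>k<n. u k * v k) - real n * a * b" .
  then show ?thesis using n unfolding a_def[symmetric] b_def[symmetric] by (simp add: field_simps)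
qed

lemma sample_cov_entry:
  fixes x :: "nat \<Rightarrow> real^'p::finite" and c :: "real^'p"
  assumes n: "n \<ge> 1"
  shows "sample_cov x n $ a $ b = (1 / real n) * (\<Sum>k<n. (x k - c) $ a * (x k - c) $ b)
     - ((1 / real n) * (\<Sum>k<n. (x k - c) $ a)) * ((1 / real n) * (\<Sum>k<n. (x k - c) $ b))"
proof -
  define u where "u k = (x k - c) $ a" for k
  define v where "v k = (x k - c) $ b" for k
  have xa: "x k $ a - (1 / real n) * (\<Sum>k<n. x k $ a) = u k - (1 / real n) * (\<Sum>k<n. u k)" for k
    using n by (simp add: u_def sum_subtractf field_simps)
  have xb: "x k $ b - (1 / real n) * (\<Sum>k<n. x k $ b) = v k - (1 / real n) * (\<Sum>k<n. v k)" for k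
    using n by (simp add: v_def sum_subtractf field_simps)
  have "sample_cov x n $ a $ b = (1 / real n) * (\<Sum>k<n. (x k $ a - (1 / real n) * (\<Sum>k<n. x k $ a)) * (x k $ b - (1 / real n) * (\<Sum>k<n. x k $ b)))"
    unfolding sample_cov_def Let_def outer_def by simp
  also have "\<dots> = (1 / real n) * (\<Sum>k<n. (u k - (1 / real n) * (\<Sum>k<n. u k)) * (v k - (1 / real n) * (\<Sum>k<n. v k)))"
    unfolding xa xb ..
  also have "\<dots> = (1 / real n) * (\<Sum>k<n. u k * v k) - ((1 / real n) * (\<Sum>k<n. u k)) * ((1 / real n) * (\<Sum>k<n. v k))"
    by (rule cov_alg[OF n])
  finally show ?thesis by (simp add: u_def v_def)
qed

definition evec :: "'p::finite \<Rightarrow> real^'p" where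
  "evec i = (\<chi> j. if j = i then 1 else 0)"

lemma inner_evec: "evec i \<bullet> v = v $ i"
proof -
  have "\<And>j. (if j = i then 1 else 0) * v $ j = (if j = i then v $ i else 0)" by simp
  then show ?thesis unfolding evec_def inner_vec_def by simp
qed

lemma evec_mat: "evec a \<bullet> (S *v evec b) = S $ a $ b"
  unfolding inner_evec by (simp add: matrix_vector_mult_def evec_def if_distrib cong: if_cong)

lemma sq_prod_le: "((a::real) * b)^2 \<le> a^4 + b^4"
proof -
  have "0 \<le> (a^2 - b^2)^2" by simp
  then have "2 * (a^2 * b^2) \<le> a^4 + b^4" by (simp add: power2_eq_square algebra_simps power4_eq_xxxx)
  moreover have "a^2 * b^2 \<ge> 0" by simp
  moreover have "(a * b)^2 = a^2 * b^2" by (simp add: power_mult_distrib)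
  ultimately show ?thesis by linarith
qed

lemma measure_le_superset:
  assumes "finite_measure M" "A \<subseteq> B" "B \<in> sets M"
  shows "measure M A \<le> measure M B"
proof (cases "A \<in> sets M")
  case True then show ?thesis using assms finite_measure.finite_measure_mono by blast
next
  case False then show ?thesis by (simp add: measure_notin_sets)
qed

theorem theorem5:
  fixes M :: "'a measure" and X :: "nat \<Rightarrow> 'a \<Rightarrow> real^'p"
    and mu :: "real^'p" and Sigma :: "real^'p^'p"
  assumes "prob_space M"
    and "transpose Sigma = Sigma"
    and "\<forall>x. x \<noteq> 0 \<longrightarrow> x \<bullet> (Sigma *v x) > 0"
    and "\<forall>i. distributed M lborel (X i) (\<lambda>x. ennreal (mvn_density mu Sigma x))"
    and "prob_space.indep_vars M (\<lambda>_. borel) X UNIV"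
    and "\<forall>n\<ge>1. 0 < rho_star Sigma n \<and> rho_star Sigma n < 1"
  shows "conv_prob_zero M
           (\<lambda>n \<omega>. real n * (rho_star (sample_cov (\<lambda>i. X i \<omega>) n) n - rho_star Sigma n))"
proof -
  interpret prob_space M by (rule assms(1))
  note sym = assms(2) and pd = assms(3) and indX = assms(5)
  have D: "\<And>k. distributed M lborel (X k) (\<lambda>x. ennreal (mvn_density mu Sigma x))" using assms(4) by blast
  have Xm[measurable]: "\<And>k. X k \<in> borel_measurable M" using distributed_measurable[OF D] by simp
  define Y where "Y k \<omega> = X k \<omega> - mu" for k \<omega>
  have Sym: "Sigma $ j $ i = Sigma $ i $ j" for i j
    using sym by (metis transpose_def vec_lambda_beta)
  have tm: "integrable M (\<lambda>\<omega>. t \<bullet> Y k \<omega>) \<and> expectation (\<lambda>\<omega>. t \<bullet> Y k \<omega>) = 0 \<and>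
            integrable M (\<lambda>\<omega>. (t \<bullet> Y k \<omega>)^2) \<and> expectation (\<lambda>\<omega>. (t \<bullet> Y k \<omega>)^2) = t \<bullet> (Sigma *v t) \<and>
            integrable M (\<lambda>\<omega>. (t \<bullet> Y k \<omega>)^4)" for t k
  proof -
    have gm: "(\<lambda>v. t \<bullet> (v - mu)) \<in> borel_measurable borel"
      by (intro borel_measurable_continuous_onI continuous_intros)
    have Zm: "(\<lambda>\<omega>. t \<bullet> Y k \<omega>) \<in> borel_measurable M"
      using measurable_comp[OF Xm[of k] gm] by (simp add: comp_def Y_def)
    have q: "t \<bullet> (Sigma *v t) \<ge> 0" using pd by (cases "t = 0") (auto simp: less_imp_le)
    have mi: "integrable M (\<lambda>\<omega>. exp (s * (t \<bullet> Y k \<omega>)))" for s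
      using mvn_mgf(1)[OF assms(1) sym pd D[of k], of "s *\<^sub>R t"] by (simp add: Y_def)
    have me: "expectation (\<lambda>\<omega>. exp (s * (t \<bullet> Y k \<omega>))) = exp (s^2 * (t \<bullet> (Sigma *v t)) / 2)" for s
      using mvn_mgf(2)[OF assms(1) sym pd D[of k], of "s *\<^sub>R t"]
      by (simp add: Y_def matrix_vector_mult_scaleR power2_eq_square mult.assoc)
    show ?thesis using gauss_moments[OF Zm q mi me] by blast
  qed
  have coord: "evec i \<bullet> Y k \<omega> = Y k \<omega> $ i" for i k \<omega> by (rule inner_evec)
  have c1: "integrable M (\<lambda>\<omega>. Y k \<omega> $ i)" "expectation (\<lambda>\<omega>. Y k \<omega> $ i) = 0"
       "integrable M (\<lambda>\<omega>. (Y k \<omega> $ i)^2)" "expectation (\<lambda>\<omega>. (Y k \<omega> $ i)^2) = Sigma $ i $ i"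
       "integrable M (\<lambda>\<omega>. (Y k \<omega> $ i)^4)" for k i
    using tm[of "evec i" k] unfolding coord evec_mat by auto
  have p1: "integrable M (\<lambda>\<omega>. Y k \<omega> $ i * Y k \<omega> $ j) \<and> expectation (\<lambda>\<omega>. Y k \<omega> $ i * Y k \<omega> $ j) = Sigma $ i $ j" for k i j
  proof -
    have s: "(evec i + evec j) \<bullet> Y k \<omega> = Y k \<omega> $ i + Y k \<omega> $ j" for \<omega>
      by (simp add: inner_add_left coord)
    have q: "(evec i + evec j) \<bullet> (Sigma *v (evec i + evec j)) = Sigma $ i $ i + 2 * Sigma $ i $ j + Sigma $ j $ j"
      by (simp add: matrix_vector_right_distrib inner_add_left inner_add_right evec_mat Sym)
    have T: "integrable M (\<lambda>\<omega>. (Y k \<omega> $ i + Y k \<omega> $ j)^2)" "expectation (\<lambda>\<omega>. (Y k \<omega> $ i + Y k \<omega> $ j)^2) = Sigma $ i $ i + 2 * Sigma $ i $ j + Sigma $ j $ j"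
      using tm[of "evec i + evec j" k] unfolding s q by auto
    have eq: "(\<lambda>\<omega>. Y k \<omega> $ i * Y k \<omega> $ j) = (\<lambda>\<omega>. ((Y k \<omega> $ i + Y k \<omega> $ j)^2 - (Y k \<omega> $ i)^2 - (Y k \<omega> $ j)^2) / 2)"
      by (auto simp: power2_eq_square algebra_simps)
    have i1: "integrable M (\<lambda>\<omega>. (Y k \<omega> $ i + Y k \<omega> $ j)^2 - (Y k \<omega> $ i)^2 - (Y k \<omega> $ j)^2)"
      using T(1) c1(3)[of k i] c1(3)[of k j] by (intro Bochner_Integration.integrable_diff)
    show ?thesis
      unfolding eq using i1 T c1(3)[of k i] c1(3)[of k j] c1(4)[of k i] c1(4)[of k j]
      by (simp add: integrable_divide)
  qed
  have Ycm[measurable]: "(\<lambda>\<omega>. Y k \<omega> $ i) \<in> borel_measurable M" for k i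
  proof -
    have gm: "(\<lambda>v. (v - mu) $ i) \<in> borel_measurable borel"
      by (intro borel_measurable_continuous_onI continuous_intros)
    show ?thesis using measurable_comp[OF Xm[of k] gm] by (simp add: comp_def Y_def)
  qed
  have p2: "integrable M (\<lambda>\<omega>. (Y k \<omega> $ i * Y k \<omega> $ j)^2)" for k i j
  proof (rule Bochner_Integration.integrable_bound)
    show "integrable M (\<lambda>\<omega>. (Y k \<omega> $ i)^4 + (Y k \<omega> $ j)^4)"
      using c1(5)[of k i] c1(5)[of k j] by (rule Bochner_Integration.integrable_add)
    show "(\<lambda>\<omega>. (Y k \<omega> $ i * Y k \<omega> $ j)^2) \<in> borel_measurable M" by measurable
    show "AE \<omega> in M. norm ((Y k \<omega> $ i * Y k \<omega> $ j)^2) \<le> norm ((Y k \<omega> $ i)^4 + (Y k \<omega> $ j)^4)"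
      using sq_prod_le by (auto intro: order_trans[OF _ abs_ge_self])
  qed
  have sameE: "expectation (\<lambda>\<omega>. g (X k \<omega>)) = expectation (\<lambda>\<omega>. g (X 0 \<omega>))"
    if g: "g \<in> borel_measurable borel" for g :: "real^'p \<Rightarrow> real" and k
  proof -
    have "distr M lborel (X k) = distr M lborel (X 0)"
      using distributed_distr_eq_density[OF D[of k]] distributed_distr_eq_density[OF D[of 0]] by simp
    then have "integral\<^sup>L (distr M lborel (X k)) g = integral\<^sup>L (distr M lborel (X 0)) g" by simp
    then show ?thesis using g distributed_measurable[OF D[of k]] distributed_measurable[OF D[of 0]]
      by (simp add: integral_distr)
  qed
  define Vp where "Vp i j = expectation (\<lambda>\<omega>. (Y 0 \<omega> $ i * Y 0 \<omega> $ j - Sigma $ i $ j)^2)" for i j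
  have wl_prod: "prob {\<omega> \<in> space M. eta \<le> \<bar>(1 / real n) * (\<Sum>k<n. Y k \<omega> $ i * Y k \<omega> $ j) - Sigma $ i $ j\<bar>}
      \<le> Vp i j / (real n * eta^2)" if eta: "eta > 0" and n: "n \<ge> 1" for eta n i j
  proof (rule wlln_bound[OF _ _ _ _ eta n])
    have gm: "(\<lambda>v. (v - mu) $ i * (v - mu) $ j) \<in> borel_measurable borel"
      by (intro borel_measurable_continuous_onI continuous_intros)
    show "indep_vars (\<lambda>_. borel) (\<lambda>k \<omega>. Y k \<omega> $ i * Y k \<omega> $ j) UNIV"
      using indep_vars_compose2[OF indX, where Y="\<lambda>_ v. (v - mu) $ i * (v - mu) $ j"] gm by (simp add: Y_def)
    show "\<And>k. integrable M (\<lambda>\<omega>. (Y k \<omega> $ i * Y k \<omega> $ j)^2)" by (rule p2)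
    show "\<And>k. expectation (\<lambda>\<omega>. Y k \<omega> $ i * Y k \<omega> $ j) = Sigma $ i $ j" using p1 by blast
    fix k
    have gm2: "(\<lambda>v. ((v - mu) $ i * (v - mu) $ j - Sigma $ i $ j)^2) \<in> borel_measurable borel"
      by (intro borel_measurable_continuous_onI continuous_intros)
    show "expectation (\<lambda>\<omega>. (Y k \<omega> $ i * Y k \<omega> $ j - Sigma $ i $ j)^2) \<le> Vp i j"
      using sameE[OF gm2, of k] by (simp add: Vp_def Y_def)
  qed
  have wl_mean: "prob {\<omega> \<in> space M. eta \<le> \<bar>(1 / real n) * (\<Sum>k<n. Y k \<omega> $ i) - 0\<bar>}
      \<le> Sigma $ i $ i / (real n * eta^2)" if eta: "eta > 0" and n: "n \<ge> 1" for eta n i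
  proof (rule wlln_bound[OF _ _ _ _ eta n])
    have gm: "(\<lambda>v. (v - mu) $ i) \<in> borel_measurable borel"
      by (intro borel_measurable_continuous_onI continuous_intros)
    show "indep_vars (\<lambda>_. borel) (\<lambda>k \<omega>. Y k \<omega> $ i) UNIV"
      using indep_vars_compose2[OF indX, where Y="\<lambda>_ v. (v - mu) $ i"] gm by (simp add: Y_def)
    show "\<And>k. integrable M (\<lambda>\<omega>. (Y k \<omega> $ i)^2)" by (rule c1(3))
    show "\<And>k. expectation (\<lambda>\<omega>. Y k \<omega> $ i) = 0" by (rule c1(2))
    show "\<And>k. expectation (\<lambda>\<omega>. (Y k \<omega> $ i - 0)^2) \<le> Sigma $ i $ i" using c1(4) by simp
  qed
  have Tc: "TrU Sigma * cE Sigma > 0"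
    using assms(6)[rule_format, of 1] by (intro rho_signs) (simp_all add: rho_star_alt)
  show ?thesis unfolding conv_prob_zero_def
  proof (intro allI impI)
    fix e :: real assume e: "e > 0"
    obtain eta0 where eta0: "eta0 > 0" and H0: "\<And>T' c' n. \<bar>T' - TrU Sigma\<bar> < eta0 \<Longrightarrow> \<bar>c' - cE Sigma\<bar> < eta0 \<Longrightarrow> n \<ge> 1 \<Longrightarrow>
       \<bar>real n * ((T' / real n) / (T' / real n + c') - (TrU Sigma / real n) / (TrU Sigma / real n + cE Sigma))\<bar> < e"
      using rho_diff_bound[OF Tc e] by blast
    obtain d where d: "d > 0" and Hd: "\<And>S. (\<forall>i j. \<bar>S $ i $ j - Sigma $ i $ j\<bar> < d) \<Longrightarrow>
            \<bar>TrU S - TrU Sigma\<bar> < eta0 \<and> \<bar>cE S - cE Sigma\<bar> < eta0"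
      using cont_entrywise[OF pd eta0] by blast
    define r where "r = sqrt (d / 2)"
    have r: "r > 0" "r * r = d / 2" using d by (auto simp: r_def)
    define B where "B n = (\<lambda>(i, j). {\<omega> \<in> space M. d / 2 \<le> \<bar>(1 / real n) * (\<Sum>k<n. Y k \<omega> $ i * Y k \<omega> $ j) - Sigma $ i $ j\<bar>})" for n
    define C where "C n i = {\<omega> \<in> space M. r \<le> \<bar>(1 / real n) * (\<Sum>k<n. Y k \<omega> $ i) - 0\<bar>}" for n i
    have Bs: "B n ij \<in> sets M" for n ij unfolding B_def by (cases ij) simp_all
    have Cs: "C n i \<in> sets M" for n i unfolding C_def by measurable
    define K where "K = (\<Sum>ij\<in>UNIV. (case ij of (i, j) \<Rightarrow> Vp i j) / (d / 2)^2) + (\<Sum>i\<in>UNIV. Sigma $ i $ i / r^2)"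
    define bad where "bad n = {\<omega> \<in> space M. e < \<bar>real n * (rho_star (sample_cov (\<lambda>i. X i \<omega>) n) n - rho_star Sigma n)\<bar>}" for n
    have incl: "bad n \<subseteq> (\<Union>ij\<in>UNIV. B n ij) \<union> (\<Union>i\<in>UNIV. C n i)" if n: "n \<ge> 1" for n
    proof
      fix \<omega> assume w: "\<omega> \<in> bad n"
      then have ws: "\<omega> \<in> space M" by (simp add: bad_def)
      show "\<omega> \<in> (\<Union>ij\<in>UNIV. B n ij) \<union> (\<Union>i\<in>UNIV. C n i)"
      proof (rule ccontr)
        assume "\<omega> \<notin> (\<Union>ij\<in>UNIV. B n ij) \<union> (\<Union>i\<in>UNIV. C n i)"
        then have hB: "\<And>i j. \<bar>(1 / real n) * (\<Sum>k<n. Y k \<omega> $ i * Y k \<omega> $ j) - Sigma $ i $ j\<bar> < d / 2"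
          and hC: "\<And>i. \<bar>(1 / real n) * (\<Sum>k<n. Y k \<omega> $ i)\<bar> < r"
          using ws by (auto simp: B_def C_def not_le)
        define S where "S = sample_cov (\<lambda>i. X i \<omega>) n"
        have Sij: "S $ i $ j = (1 / real n) * (\<Sum>k<n. Y k \<omega> $ i * Y k \<omega> $ j)
            - ((1 / real n) * (\<Sum>k<n. Y k \<omega> $ i)) * ((1 / real n) * (\<Sum>k<n. Y k \<omega> $ j))" for i j
          unfolding S_def Y_def by (rule sample_cov_entry[OF n])
        have "\<bar>S $ i $ j - Sigma $ i $ j\<bar> < d" for i j
        proof -
          have "\<bar>((1 / real n) * (\<Sum>k<n. Y k \<omega> $ i)) * ((1 / real n) * (\<Sum>k<n. Y k \<omega> $ j))\<bar> \<le> r * r"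
            unfolding abs_mult using hC[of i] hC[of j] r(1) by (intro mult_mono) auto
          then show ?thesis unfolding Sij using hB[of i j] r by linarith
        qed
        then have "\<bar>TrU S - TrU Sigma\<bar> < eta0 \<and> \<bar>cE S - cE Sigma\<bar> < eta0" using Hd by blast
        then have "\<bar>real n * ((TrU S / real n) / (TrU S / real n + cE S) - (TrU Sigma / real n) / (TrU Sigma / real n + cE Sigma))\<bar> < e"
          using H0 n by blast
        then show False using w by (simp add: bad_def rho_star_alt S_def)
      qed
    qed
    have bound: "measure M (bad n) \<le> K / real n" if n: "n \<ge> 1" for n
    proof -
      have "measure M (bad n) \<le> measure M ((\<Union>ij\<in>UNIV. B n ij) \<union> (\<Union>i\<in>UNIV. C n i))"
        using Bs Cs by (intro measure_le_superset incl[OF n]) auto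
      also have "\<dots> \<le> measure M (\<Union>ij\<in>UNIV. B n ij) + measure M (\<Union>i\<in>UNIV. C n i)"
        using Bs Cs by (intro measure_Un_le) auto
      also have "\<dots> \<le> (\<Sum>ij\<in>UNIV. measure M (B n ij)) + (\<Sum>i\<in>UNIV. measure M (C n i))"
        using Bs Cs by (intro add_mono finite_measure_subadditive_finite) auto
      also have "\<dots> \<le> (\<Sum>ij\<in>UNIV. (case ij of (i, j) \<Rightarrow> Vp i j) / (real n * (d / 2)^2)) + (\<Sum>i\<in>UNIV. Sigma $ i $ i / (real n * r^2))"
      proof (intro add_mono sum_mono)
        fix ij :: "'p \<times> 'p"
        show "measure M (B n ij) \<le> (case ij of (i, j) \<Rightarrow> Vp i j) / (real n * (d / 2)^2)"
          using wl_prod[of "d / 2" n] d n by (cases ij) (simp add: B_def)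
      next
        fix i :: 'p
        show "measure M (C n i) \<le> Sigma $ i $ i / (real n * r^2)"
          using wl_mean[OF r(1) n, of i] by (simp add: C_def)
      qed
      also have "\<dots> = K / real n"
        by (simp add: K_def sum_divide_distrib[symmetric] add_divide_distrib field_simps)
      finally show ?thesis .
    qed
    have "(\<lambda>n. measure M (bad n)) \<longlonglongrightarrow> 0"
    proof (rule tendsto_sandwich[of "\<lambda>_. 0" _ sequentially "\<lambda>n. K / real n"])
      show "\<forall>\<^sub>F n in sequentially. 0 \<le> measure M (bad n)" by simp
      show "\<forall>\<^sub>F n in sequentially. measure M (bad n) \<le> K / real n"
        using bound by (intro eventually_sequentiallyI[of 1]) auto
      show "(\<lambda>_. 0::real) \<longlonglongrightarrow> 0" by simp
      show "(\<lambda>n. K / real n) \<longlonglongrightarrow> 0" by (rule lim_const_over_n)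
    qed
    then show "(\<lambda>n. measure M {\<omega> \<in> space M. e < \<bar>real n * (rho_star (sample_cov (\<lambda>i. X i \<omega>) n) n - rho_star Sigma n)\<bar>}) \<longlonglongrightarrow> 0"
      by (simp add: bad_def)
  qed
qed

end
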